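(* Let $n\ge 3$ and let $f:\mathcal C\to\mathbb C$ be bounded, measurable, with bounded support contained in a bounded set $B\subset\mathbb R^{n+2}$. Then for every $s\in(\frac n2,n)$, $$|M_f(s)|\ll_{s,B}\|f\|_{L^2(\mu_{\mathcal C})}^2,$$ where $M_f=M_{f,f}$.
   Context: Polar coordinates on $\mathcal C=\{x\in\mathbb R^{n+2}:x_1^2+\dots+x_{n+1}^2=x_{n+2}^2,\ x_{n+2}>0\}$: every $x\in\mathcal C$ is uniquely $x=y^{-1}(\omega,1)$ with $y>0$, $\omega\in S^n\subset\mathbb R^{n+1}$; write $f(y,\omega)$ for $f(y^{-1}(\omega,1))$. The measure $\mu_{\mathcal C}$ is $y^{-(n+1)}dy\,d\sigma(\omega)$, with $\sigma$ the rotation-invariant probability on $S^n$. Let $L^2(S^n)=\bigoplus_{d\ge0}\mathcal H_d$ be the decomposition into spaces of spherical harmonics of degree $d$, and $\{\psi_{d,l}\}_l$ an orthonormal basis of $\mathcal H_d$. Set $f_{d,l}(y)=\int_{S^n}f(y,\omega)\overline{\psi_{d,l}(\omega)}\,d\sigma(\omega)$ and, for a function $g$ on $(0,\infty)$, the Mellin transform $\widetilde g(s)=\int_0^\infty g(y)y^{-(s+1)}dy$. For $s\in(\frac n2,n)$ define $P_0(s)=1$, $P_d(s)=\prod_{i=0}^{d-1}\frac{n-s+i}{s+i}$ ($d\ge1$), and for $f,f'$ bounded with bounded support, $M_{f,f'}(s)=\sum_{d,l\ge0}P_d(s)\widetilde{f_{d,l}}(s)\overline{\widetilde{f'_{d,l}}(s)}$.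 *)

theory Defs
  imports "HOL-Analysis.Analysis"
begin

text \<open>The light cone C in R^(n+2) = 'a x real, where 'a is R^(n+1), n = DIM('a) - 1.\<close>
definition lcone :: "('a::euclidean_space \<times> real) set" where
  "lcone = {(v, t). norm v = t \<and> t > 0}"

text \<open>Rotation-invariant probability measure sigma on the unit sphere S^n of 'a:
  the normalized cone (radial-projection) measure of the unit ball.\<close>
definition sph :: "'a::euclidean_space measure" where
  "sph = distr
     (scale_measure (ennreal (1 / measure lborel (ball (0::'a) 1)))
        (restrict_space lborel (ball 0 1 - {0})))
     (restrict_space borel (sphere 0 1)) (\<lambda>x. x /\<^sub>R norm x)"

definition fpol :: "('a::euclidean_space \<times> real \<Rightarrow> complex) \<Rightarrow> real \<Rightarrow> 'a \<Rightarrow> complex" where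
  "fpol f y \<omega> = f ((1 / y) *\<^sub>R \<omega>, 1 / y)"

definition homogeneous_deg :: "nat \<Rightarrow> ('a::real_normed_vector \<Rightarrow> real) \<Rightarrow> bool" where
  "homogeneous_deg d p \<longleftrightarrow> (\<forall>t x. p (t *\<^sub>R x) = t ^ d * p x)"

definition laplacian :: "('a::euclidean_space \<Rightarrow> real) \<Rightarrow> 'a \<Rightarrow> real" where
  "laplacian p x = (\<Sum>b\<in>Basis. deriv (\<lambda>t. deriv (\<lambda>u. p (x + u *\<^sub>R b)) t) 0)"

definition harm_hom_poly :: "nat \<Rightarrow> ('a::euclidean_space \<Rightarrow> real) \<Rightarrow> bool" where
  "harm_hom_poly d p \<longleftrightarrow> real_polynomial_function p \<and> homogeneous_deg d p \<and> (\<forall>x. laplacian p x = 0)"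

text \<open>H_d: (complex) spherical harmonics of degree d, as functions on the sphere
  (values off the sphere are irrelevant).\<close>
definition sph_harm :: "nat \<Rightarrow> ('a::euclidean_space \<Rightarrow> complex) set" where
  "sph_harm d = {h. \<exists>p q. harm_hom_poly d p \<and> harm_hom_poly d q \<and>
                      (\<forall>x\<in>sphere 0 1. h x = Complex (p x) (q x))}"

definition is_sph_onb :: "(nat \<Rightarrow> nat) \<Rightarrow> (nat \<Rightarrow> nat \<Rightarrow> 'a::euclidean_space \<Rightarrow> complex) \<Rightarrow> bool" where
  "is_sph_onb N \<psi> \<longleftrightarrow>
     (\<forall>d. \<forall>l<N d. \<psi> d l \<in> sph_harm d) \<and>
     (\<forall>d. \<forall>l<N d. \<forall>l'<N d. (\<integral>\<omega>. \<psi> d l \<omega> * cnj (\<psi> d l' \<omega>) \<partial>sph) = (if l = l' then 1 else 0)) \<and>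
     (\<forall>d. \<forall>h\<in>sph_harm d. \<exists>c. \<forall>x\<in>sphere 0 1. h x = (\<Sum>l<N d. c l * \<psi> d l x))"

definition fdl :: "(nat \<Rightarrow> nat \<Rightarrow> 'a::euclidean_space \<Rightarrow> complex) \<Rightarrow> ('a \<times> real \<Rightarrow> complex)
    \<Rightarrow> nat \<Rightarrow> nat \<Rightarrow> real \<Rightarrow> complex" where
  "fdl \<psi> f d l y = (\<integral>\<omega>. fpol f y \<omega> * cnj (\<psi> d l \<omega>) \<partial>sph)"

definition mellin :: "(real \<Rightarrow> complex) \<Rightarrow> real \<Rightarrow> complex" where
  "mellin g s = (LINT y:{0<..}|lborel. g y * complex_of_real (y powr (-(s + 1))))"

definition Pd :: "nat \<Rightarrow> nat \<Rightarrow> real \<Rightarrow> real" where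
  "Pd n d s = (\<Prod>i<d. (real n - s + real i) / (s + real i))"

definition Mff :: "(nat \<Rightarrow> nat) \<Rightarrow> (nat \<Rightarrow> nat \<Rightarrow> 'a::euclidean_space \<Rightarrow> complex)
    \<Rightarrow> ('a \<times> real \<Rightarrow> complex) \<Rightarrow> ('a \<times> real \<Rightarrow> complex) \<Rightarrow> real \<Rightarrow> complex" where
  "Mff N \<psi> f f' s = (\<Sum>d. complex_of_real (Pd (DIM('a) - 1) d s) *
       (\<Sum>l<N d. mellin (fdl \<psi> f d l) s * cnj (mellin (fdl \<psi> f' d l) s)))"

text \<open>Squared L^2(mu_C) norm, mu_C = y^-(n+1) dy dsigma.\<close>
definition L2sq_cone :: "('a::euclidean_space \<times> real \<Rightarrow> complex) \<Rightarrow> real" where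
  "L2sq_cone f = (LINT y:{0<..}|lborel.
      (\<integral>\<omega>. (cmod (fpol f y \<omega>))\<^sup>2 \<partial>sph) * y powr (-(real (DIM('a) - 1) + 1)))"

end

theory Submission
  imports Defs
begin


lemma rpf_deriv_ex:
  fixes p :: "'a::euclidean_space \<Rightarrow> real"
  assumes "real_polynomial_function p"
  shows "\<exists>D. (\<forall>x. (p has_derivative D x) (at x)) \<and> (\<forall>h. real_polynomial_function (\<lambda>x. D x h))"
  using assms
proof (induction p rule: real_polynomial_function.induct)
  case (linear f)
  then show ?case
    by (rule_tac x="\<lambda>x. f" in exI) (auto intro: bounded_linear_imp_has_derivative)
next
  case (const c)
  then show ?case by (rule_tac x="\<lambda>x h. 0" in exI) auto
next
  case (add f g)
  then obtain D1 D2 where "\<forall>x. (f has_derivative D1 x) (at x)" "\<forall>h. real_polynomial_function (\<lambda>x. D1 x h)"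
    "\<forall>x. (g has_derivative D2 x) (at x)" "\<forall>h. real_polynomial_function (\<lambda>x. D2 x h)" by blast
  then show ?case
    by (rule_tac x="\<lambda>x h. D1 x h + D2 x h" in exI) (auto intro!: has_derivative_add)
next
  case (mult f g)
  then obtain D1 D2 where "\<forall>x. (f has_derivative D1 x) (at x)" "\<forall>h. real_polynomial_function (\<lambda>x. D1 x h)"
    "\<forall>x. (g has_derivative D2 x) (at x)" "\<forall>h. real_polynomial_function (\<lambda>x. D2 x h)" by blast
  then show ?case
    using mult.hyps
    by (rule_tac x="\<lambda>x h. f x * D2 x h + D1 x h * g x" in exI)
       (auto intro!: has_derivative_mult real_polynomial_function.intros(3,4))
qed

definition pd :: "('a::euclidean_space \<Rightarrow> real) \<Rightarrow> 'a \<Rightarrow> 'a \<Rightarrow> real" where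
  "pd p = (SOME D. (\<forall>x. (p has_derivative D x) (at x)) \<and> (\<forall>h. real_polynomial_function (\<lambda>x. D x h)))"

lemma pd:
  assumes "real_polynomial_function p"
  shows "(p has_derivative pd p x) (at x)" "real_polynomial_function (\<lambda>x. pd p x h)"
  using someI_ex[OF rpf_deriv_ex[OF assms]] unfolding pd_def by blast+

lemma pd_unique:
  assumes "real_polynomial_function p" "(p has_derivative D) (at x)"
  shows "pd p x = D"
  using has_derivative_unique[OF pd(1)[OF assms(1)] assms(2)] .

lemma pd_linear: "real_polynomial_function p \<Longrightarrow> linear (pd p x)"
  using pd(1) has_derivative_linear by blast

lemma dir_deriv:
  fixes p :: "'a::euclidean_space \<Rightarrow> real"
  assumes "real_polynomial_function p"
  shows "((\<lambda>u. p (x + u *\<^sub>R b)) has_real_derivative pd p (x + t *\<^sub>R b) b) (at t)"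
proof -
  have l: "linear (pd p (x + t *\<^sub>R b))" using pd_linear[OF assms] .
  have "((\<lambda>u. x + u *\<^sub>R b) has_derivative (\<lambda>h. h *\<^sub>R b)) (at t)"
    by (auto intro!: derivative_eq_intros)
  from has_derivative_compose[OF this pd(1)[OF assms]]
  have "((\<lambda>u. p (x + u *\<^sub>R b)) has_derivative (\<lambda>h. pd p (x + t *\<^sub>R b) (h *\<^sub>R b))) (at t)" by (simp add: o_def)
  moreover have "(\<lambda>h. pd p (x + t *\<^sub>R b) (h *\<^sub>R b)) = (\<lambda>h. pd p (x + t *\<^sub>R b) b * h)"
    using linear_scale[OF l] by auto
  ultimately have *: "((\<lambda>u. p (x + u *\<^sub>R b)) has_derivative (\<lambda>h. h * pd p (x + t *\<^sub>R b) b)) (at t)"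
    by (simp add: mult.commute)
  have eq: "(*) (pd p (x + t *\<^sub>R b) b) = (\<lambda>h. h * pd p (x + t *\<^sub>R b) b)" by (auto simp: fun_eq_iff)
  show ?thesis unfolding has_field_derivative_def eq by (rule *)
qed

lemma deriv_dir: "real_polynomial_function p \<Longrightarrow> deriv (\<lambda>u. p (x + u *\<^sub>R b)) t = pd p (x + t *\<^sub>R b) b"
  using DERIV_imp_deriv dir_deriv by blast

lemma laplacian_pd:
  assumes "real_polynomial_function p"
  shows "laplacian p x = (\<Sum>b\<in>Basis. pd (\<lambda>z. pd p z b) x b)"
proof -
  have "deriv (\<lambda>t. deriv (\<lambda>u. p (x + u *\<^sub>R b)) t) 0 = pd (\<lambda>z. pd p z b) x b" for b
  proof -
    have "deriv (\<lambda>t. deriv (\<lambda>u. p (x + u *\<^sub>R b)) t) 0 = deriv (\<lambda>t. pd p (x + t *\<^sub>R b) b) 0"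
      using deriv_dir[OF assms] by simp
    also have "\<dots> = pd (\<lambda>z. pd p z b) (x + 0 *\<^sub>R b) b"
      by (rule deriv_dir) (rule pd(2)[OF assms])
    finally show ?thesis by simp
  qed
  then show ?thesis unfolding laplacian_def by simp
qed

lemma euler:
  assumes "real_polynomial_function p" "homogeneous_deg d p"
  shows "pd p x x = real d * p x"
proof -
  have "((\<lambda>u. p (0 + u *\<^sub>R x)) has_real_derivative pd p (0 + 1 *\<^sub>R x) x) (at 1)"
    by (rule dir_deriv[OF assms(1)])
  moreover have "(\<lambda>u. p (0 + u *\<^sub>R x)) = (\<lambda>u. u ^ d * p x)"
    using assms(2) unfolding homogeneous_deg_def by simp
  ultimately have a: "((\<lambda>u. u ^ d * p x) has_real_derivative pd p x x) (at 1)" by simp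
  have b: "((\<lambda>u. u ^ d * p x) has_real_derivative (real d * 1 ^ (d - 1)) * p x) (at 1)"
    by (auto intro!: derivative_eq_intros)
  show ?thesis using DERIV_unique[OF a b] by simp
qed

lemma pd_expand:
  assumes "real_polynomial_function p"
  shows "pd p x y = (\<Sum>b\<in>Basis. (y \<bullet> b) * pd p x b)"
proof -
  have l: "linear (pd p x)" by (rule pd_linear[OF assms])
  have "pd p x y = pd p x (\<Sum>b\<in>Basis. (y \<bullet> b) *\<^sub>R b)" by (simp add: euclidean_representation)
  also have "\<dots> = (\<Sum>b\<in>Basis. (y \<bullet> b) * pd p x b)"
    by (simp add: linear_sum[OF l] linear_scale[OF l])
  finally show ?thesis .
qed

definition harm_real :: "nat \<Rightarrow> ('a::euclidean_space \<Rightarrow> real) \<Rightarrow> bool" where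
  "harm_real d p \<longleftrightarrow> harm_hom_poly d p"

lemma green_div:
  fixes u v :: "'a::euclidean_space \<Rightarrow> real"
  assumes u: "harm_hom_poly d u" and v: "harm_hom_poly e v"
  defines "G \<equiv> \<lambda>b x. u x * pd v x b - v x * pd u x b"
  shows "\<And>b. real_polynomial_function (G b)"
    and "\<And>b x. (G b has_derivative pd (G b) x) (at x)"
    and "\<And>x. (\<Sum>b\<in>Basis. pd (G b) x b) = 0"
    and "\<And>x. (\<Sum>b\<in>Basis. (x \<bullet> b) * G b x) = (real e - real d) * (u x * v x)"
proof -
  have pu: "real_polynomial_function u" and pv: "real_polynomial_function v"
    using u v unfolding harm_hom_poly_def by auto
  show gp: "real_polynomial_function (G b)" for b
    unfolding G_def using pd(2)[OF pu] pd(2)[OF pv] pu pv by (intro real_polynomial_function_diff real_polynomial_function.intros(4)) auto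
  show "(G b has_derivative pd (G b) x) (at x)" for b x by (rule pd(1)[OF gp])
  have gd: "pd (G b) x b = u x * pd (\<lambda>z. pd v z b) x b - v x * pd (\<lambda>z. pd u z b) x b" for b x
  proof -
    have "(G b has_derivative (\<lambda>h. (u x * pd (\<lambda>z. pd v z b) x h + pd u x h * pd v x b)
               - (v x * pd (\<lambda>z. pd u z b) x h + pd v x h * pd u x b))) (at x)"
      unfolding G_def
      by (intro has_derivative_diff has_derivative_mult pd(1) pu pv pd(2))
    from pd_unique[OF gp this] show ?thesis by simp
  qed
  show "(\<Sum>b\<in>Basis. pd (G b) x b) = 0" for x
  proof -
    have "(\<Sum>b\<in>Basis. pd (G b) x b) = u x * laplacian v x - v x * laplacian u x"
      by (simp add: gd laplacian_pd[OF pu] laplacian_pd[OF pv] sum_subtractf sum_distrib_left)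
    also have "\<dots> = 0" using u v unfolding harm_hom_poly_def by simp
    finally show ?thesis .
  qed
  show "(\<Sum>b\<in>Basis. (x \<bullet> b) * G b x) = (real e - real d) * (u x * v x)" for x
  proof -
    have "(\<Sum>b\<in>Basis. (x \<bullet> b) * G b x) = u x * pd v x x - v x * pd u x x"
      by (simp add: G_def pd_expand[OF pu, of x x] pd_expand[OF pv, of x x] right_diff_distrib sum_subtractf sum_distrib_left mult.assoc mult.left_commute)
    also have "\<dots> = (real e - real d) * (u x * v x)"
      using euler[OF pu, of d x] euler[OF pv, of e x] u v unfolding harm_hom_poly_def by (simp add: algebra_simps)
    finally show ?thesis .
  qed
qed


lemma bounded_cont_supp:
  fixes g :: "'a::euclidean_space \<Rightarrow> real"
  assumes "continuous_on UNIV g" "\<And>x. R < norm x \<Longrightarrow> g x = 0"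
  obtains M where "\<And>x. \<bar>g x\<bar> \<le> M" "0 \<le> M"
proof -
  have "compact (g ` cball 0 R)"
    by (rule compact_continuous_image) (auto intro: continuous_on_subset[OF assms(1)])
  then obtain M where M: "\<And>y. y \<in> g ` cball 0 R \<Longrightarrow> norm y \<le> M"
    using compact_imp_bounded bounded_iff by metis
  have "\<bar>g x\<bar> \<le> max M 0" for x
    using M[of "g x"] assms(2)[of x] by (cases "norm x \<le> R") auto
  then show ?thesis using that[of "max M 0"] by auto
qed

lemma integrable_cont_supp:
  fixes g :: "'a::euclidean_space \<Rightarrow> real"
  assumes "continuous_on UNIV g" "\<And>x. R < norm x \<Longrightarrow> g x = 0"
  shows "integrable lborel g"
proof -
  have "integrable lborel (\<lambda>x. indicator (cball 0 R) x *\<^sub>R g x)"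
    by (rule borel_integrable_compact) (auto intro: continuous_on_subset[OF assms(1)])
  moreover have "(\<lambda>x. indicator (cball 0 R) x *\<^sub>R g x) = g"
    using assms(2) by (auto simp: fun_eq_iff indicator_def not_le)
  ultimately show ?thesis by simp
qed

lemma integral_translate:
  fixes g :: "'a::euclidean_space \<Rightarrow> real"
  assumes "g \<in> borel_measurable borel"
  shows "(\<integral>x. g (x + c) \<partial>lborel) = (\<integral>x. g x \<partial>lborel)"
proof -
  have "(\<integral>x. g x \<partial>lborel) = (\<integral>x. g x \<partial>(distr lborel borel ((+) c)))"
    by (simp add: lborel_distr_plus)
  also have "\<dots> = (\<integral>x. g (c + x) \<partial>lborel)"
    by (rule integral_distr) (auto simp: assms)
  finally show ?thesis by (simp add: add.commute)
qed

lemma ibp_zero: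
  fixes H :: "'a::euclidean_space \<Rightarrow> real"
  assumes der: "\<And>x. (H has_derivative H' x) (at x)"
    and cont: "continuous_on UNIV (\<lambda>x. H' x e)"
    and supp: "\<And>x. R < norm x \<Longrightarrow> H x = 0"
    and supp': "\<And>x. R < norm x \<Longrightarrow> H' x e = 0"
  shows "integrable lborel (\<lambda>x. H' x e)" "(\<integral>x. H' x e \<partial>lborel) = 0"
proof -
  show intH': "integrable lborel (\<lambda>x. H' x e)" by (rule integrable_cont_supp[OF cont supp'])
  have contH: "continuous_on UNIV H"
    using der by (meson continuous_at_imp_continuous_on has_derivative_continuous)
  obtain M where M: "\<And>x. \<bar>H' x e\<bar> \<le> M" "0 \<le> M" using bounded_cont_supp[OF cont supp'] by blast
  define \<phi> where "\<phi> = (\<lambda>(t::real, x::'a). indicator {0..1} t * H' (x + t *\<^sub>R e) e)"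
  have contc: "continuous_on UNIV (\<lambda>(t::real, x::'a). H' (x + t *\<^sub>R e) e)"
  proof -
    have "continuous_on UNIV (\<lambda>p::real\<times>'a. snd p + fst p *\<^sub>R e)" by (intro continuous_intros)
    then have "continuous_on UNIV ((\<lambda>y. H' y e) \<circ> (\<lambda>p::real\<times>'a. snd p + fst p *\<^sub>R e))"
      by (rule continuous_on_compose) (rule continuous_on_subset[OF cont], auto)
    then show ?thesis by (simp add: o_def case_prod_beta')
  qed
  have meas: "\<phi> \<in> borel_measurable (lborel \<Otimes>\<^sub>M lborel)"
  proof -
    have "(\<lambda>(t::real, x::'a). H' (x + t *\<^sub>R e) e) \<in> borel_measurable borel"
      using contc by (rule borel_measurable_continuous_onI)
    then have "(\<lambda>(t::real, x::'a). H' (x + t *\<^sub>R e) e) \<in> borel_measurable (lborel \<Otimes>\<^sub>M lborel)"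
      by (simp add: lborel_prod measurable_lborel1)
    moreover have "(\<lambda>(t::real, x::'a). indicator {0..1} t :: real) \<in> borel_measurable (lborel \<Otimes>\<^sub>M lborel)"
      by measurable
    ultimately show ?thesis unfolding \<phi>_def
      by (subst case_prod_beta', subst (asm) (1 2) case_prod_beta') (rule borel_measurable_times)
  qed
  have intphi: "integrable (lborel \<Otimes>\<^sub>M lborel) \<phi>"
  proof (rule Bochner_Integration.integrable_bound)
    have bd: "bounded ({0..1::real} \<times> cball (0::'a) (R + norm e))" by (simp add: bounded_Times)
    have "emeasure (lborel::(real\<times>'a) measure) ({0..1::real} \<times> cball (0::'a) (R + norm e)) < \<infinity>"
      by (rule emeasure_bounded_finite[OF bd])
    then show "integrable (lborel \<Otimes>\<^sub>M lborel) (\<lambda>p. indicator ({0..1::real} \<times> cball (0::'a) (R + norm e)) p * M)"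
      by (intro integrable_mult_left integrable_real_indicator)
         (auto simp: lborel_prod intro!: emeasure_bounded_finite simp: bounded_Times)
    show "\<phi> \<in> borel_measurable (lborel \<Otimes>\<^sub>M lborel)" by (rule meas)
    show "AE p in lborel \<Otimes>\<^sub>M lborel. norm (\<phi> p) \<le> norm (indicator ({0..1::real} \<times> cball (0::'a) (R + norm e)) p * M)"
    proof (intro AE_I2, clarify)
      fix t :: real and x :: 'a
      show "norm (\<phi> (t, x)) \<le> norm (indicator ({0..1::real} \<times> cball (0::'a) (R + norm e)) (t, x) * M)"
      proof (cases "t \<in> {0..1} \<and> norm x \<le> R + norm e")
        case True then show ?thesis using M by (auto simp: \<phi>_def indicator_def)
      next
        case False
        show ?thesis
        proof (cases "t \<in> {0..1}")
          case True
          with False have "R + norm e < norm x" by auto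
          moreover have "norm (t *\<^sub>R e) \<le> norm e" using True by (auto simp: mult_left_le_one_le)
          ultimately have "R < norm (x + t *\<^sub>R e)" using norm_triangle_ineq2[of x "- (t *\<^sub>R e)"] by auto
          then show ?thesis using supp' True M by (auto simp: \<phi>_def indicator_def)
        qed (auto simp: \<phi>_def indicator_def)
      qed
    qed
  qed
  have ftc: "(\<integral>t. \<phi> (t, x) \<partial>lborel) = H (x + e) - H x" for x
  proof -
    have "(LBINT t. H' (x + t *\<^sub>R e) e * indicator {0..1} t) = H (x + 1 *\<^sub>R e) - H (x + 0 *\<^sub>R e)"
    proof (rule integral_FTC_Icc_real)
      fix t :: real
      have "((\<lambda>u. x + u *\<^sub>R e) has_derivative (\<lambda>h. h *\<^sub>R e)) (at t)" by (auto intro!: derivative_eq_intros)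
      from has_derivative_compose[OF this der]
      have "((\<lambda>u. H (x + u *\<^sub>R e)) has_derivative (\<lambda>h. H' (x + t *\<^sub>R e) (h *\<^sub>R e))) (at t)" by (simp add: o_def)
      moreover have "linear (H' (x + t *\<^sub>R e))" using der has_derivative_linear by blast
      ultimately have *: "((\<lambda>u. H (x + u *\<^sub>R e)) has_derivative (\<lambda>h. h * H' (x + t *\<^sub>R e) e)) (at t)"
        by (simp add: linear_scale)
      have eq: "(*) (H' (x + t *\<^sub>R e) e) = (\<lambda>h. h * H' (x + t *\<^sub>R e) e)" by (auto simp: fun_eq_iff)
      show "((\<lambda>u. H (x + u *\<^sub>R e)) has_real_derivative H' (x + t *\<^sub>R e) e) (at t)"
        unfolding has_field_derivative_def eq by (rule *)
      have "continuous_on UNIV ((\<lambda>y. H' y e) \<circ> (\<lambda>u. x + u *\<^sub>R e))"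
        by (rule continuous_on_compose) (auto intro!: continuous_intros intro: continuous_on_subset[OF cont])
      then show "isCont (\<lambda>u. H' (x + u *\<^sub>R e) e) t"
        by (simp add: o_def continuous_on_eq_continuous_at)
    qed simp
    then show ?thesis by (simp add: \<phi>_def mult.commute)
  qed
  have inner: "(\<integral>x. \<phi> (t, x) \<partial>lborel) = indicator {0..1} t * (\<integral>x. H' x e \<partial>lborel)" for t
  proof -
    have m: "(\<lambda>x. H' x e) \<in> borel_measurable borel" by (rule borel_measurable_continuous_onI[OF cont])
    have "(\<integral>x. \<phi> (t, x) \<partial>lborel) = indicator {0..1} t * (\<integral>x. H' (x + t *\<^sub>R e) e \<partial>lborel)"
      by (simp add: \<phi>_def)
    also have "\<dots> = indicator {0..1} t * (\<integral>x. H' x e \<partial>lborel)"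
      using integral_translate[OF m, of "t *\<^sub>R e"] by simp
    finally show ?thesis .
  qed
  have "(\<integral>x. H' x e \<partial>lborel) = (\<integral>t. (\<integral>x. \<phi> (t, x) \<partial>lborel) \<partial>lborel)"
    by (simp add: inner)
  also have "\<dots> = (\<integral>x. (\<integral>t. \<phi> (t, x) \<partial>lborel) \<partial>lborel)"
  proof -
    have "integrable (lborel \<Otimes>\<^sub>M lborel) (\<lambda>(t, x). \<phi> (t, x))" using intphi by simp
    from lborel_pair.Fubini_integral[of "\<lambda>t x. \<phi> (t, x)", OF this] show ?thesis by simp
  qed
  also have "\<dots> = (\<integral>x. H (x + e) - H x \<partial>lborel)" by (simp add: ftc)
  also have "\<dots> = (\<integral>x. H (x + e) \<partial>lborel) - (\<integral>x. H x \<partial>lborel)"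
  proof (rule Bochner_Integration.integral_diff)
    show "integrable lborel H" by (rule integrable_cont_supp[OF contH supp])
    have mH: "H \<in> borel_measurable borel" by (rule borel_measurable_continuous_onI[OF contH])
    have "integrable lborel (\<lambda>x. H (x + e))"
    proof (rule integrable_cont_supp)
      show "continuous_on UNIV (\<lambda>x. H (x + e))"
        by (rule continuous_on_compose2[OF contH]) (auto intro!: continuous_intros)
      show "R + norm e < norm x \<Longrightarrow> H (x + e) = 0" for x
        using supp[of "x + e"] norm_triangle_ineq2[of x "- e"] by auto
    qed
    then show "integrable lborel (\<lambda>x. H (x + e))" .
  qed
  also have "\<dots> = 0"
    using integral_translate[OF borel_measurable_continuous_onI[OF contH], of e] by simp
  finally show "(\<integral>x. H' x e \<partial>lborel) = 0" .
qed


lemma scale_integral: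
  fixes F :: "'a::euclidean_space \<Rightarrow> real"
  assumes "F \<in> borel_measurable borel" "t > 0"
  shows "(\<integral>x. F x \<partial>lborel) = t ^ DIM('a) * (\<integral>x. F (t *\<^sub>R x) \<partial>lborel)"
proof -
  have "(\<integral>x. F x \<partial>lborel) = (\<integral>x. F x \<partial>(density (distr lborel borel (\<lambda>x. 0 + t *\<^sub>R x)) (\<lambda>_. \<bar>t\<bar> ^ DIM('a))))"
    using lborel_affine[of t "0::'a"] assms(2) by simp
  also have "\<dots> = (\<integral>x. F x \<partial>(density (distr lborel borel (\<lambda>x. 0 + t *\<^sub>R x)) (\<lambda>_. ennreal (t ^ DIM('a)))))"
    using assms(2) by (simp add: ennreal_power)
  also have "\<dots> = (\<integral>x. t ^ DIM('a) *\<^sub>R F x \<partial>(distr lborel borel (\<lambda>x. 0 + t *\<^sub>R x)))"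
    by (rule integral_density) (use assms in auto)
  also have "\<dots> = (\<integral>x. t ^ DIM('a) *\<^sub>R F (0 + t *\<^sub>R x) \<partial>lborel)"
    by (rule integral_distr) (use assms in auto)
  finally show ?thesis by simp
qed

locale hom0 =
  fixes g :: "'a::euclidean_space \<Rightarrow> real" and M :: real
  assumes meas: "g \<in> borel_measurable borel"
    and bnd: "\<And>x. \<bar>g x\<bar> \<le> M"
    and hom: "\<And>c x. c > 0 \<Longrightarrow> g (c *\<^sub>R x) = g x"
begin

definition I :: "real \<Rightarrow> real" where
  "I t = (\<integral>x. indicator (ball 0 t) x * g x \<partial>lborel)"

lemma I_scale:
  assumes "t > 0"
  shows "I t = t ^ DIM('a) * I 1"
proof -
  have "I t = t ^ DIM('a) * (\<integral>x. indicator (ball 0 t) (t *\<^sub>R x) * g (t *\<^sub>R x) \<partial>lborel)"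
    unfolding I_def by (rule scale_integral) (use assms meas in \<open>auto intro!: borel_measurable_times borel_measurable_indicator\<close>)
  also have "(\<lambda>x. indicator (ball 0 t) (t *\<^sub>R x) * g (t *\<^sub>R x)) = (\<lambda>x. indicator (ball (0::'a) 1) x * g x)"
    using assms by (auto simp: fun_eq_iff indicator_def hom)
  finally show ?thesis unfolding I_def by simp
qed

lemma I_0: "I 0 = 0" by (simp add: I_def)

lemma I_eq: "I t = (\<integral>x. indicator (ball 0 t) x * g x \<partial>lborel)" by (simp add: I_def)

lemma int_pow: "integrable lborel (\<lambda>x. indicator (ball 0 1) x * (norm x ^ j * g x))"
proof (rule Bochner_Integration.integrable_bound)
  have M0: "0 \<le> M" using bnd[of 0] by simp
  have "emeasure lborel (ball (0::'a) 1) < \<infinity>" by (rule emeasure_bounded_finite) simp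
  then show "integrable lborel (\<lambda>x. indicator (ball (0::'a) 1) x * M)"
    by (intro integrable_mult_left integrable_real_indicator) auto
  have "(\<lambda>x::'a. norm x ^ j) \<in> borel_measurable borel" by (intro borel_measurable_continuous_onI continuous_intros)
  then show "(\<lambda>x. indicator (ball 0 1) x * (norm x ^ j * g x)) \<in> borel_measurable lborel" using meas
    by (auto simp: measurable_lborel1 intro!: borel_measurable_times borel_measurable_indicator)
  show "AE x in lborel. norm (indicator (ball 0 1) x * (norm x ^ j * g x)) \<le> norm (indicator (ball (0::'a) 1) x * M)"
  proof (intro AE_I2)
    fix x :: 'a
    show "norm (indicator (ball 0 1) x * (norm x ^ j * g x)) \<le> norm (indicator (ball (0::'a) 1) x * M)"
    proof (cases "norm x < 1")
      case True
      have "norm x ^ j \<le> 1" using True by (simp add: power_le_one)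
      then have "norm x ^ j * \<bar>g x\<bar> \<le> 1 * M" using bnd[of x] M0 by (intro mult_mono) auto
      then show ?thesis using True M0 by (simp add: indicator_def abs_mult)
    qed (simp add: indicator_def)
  qed
qed

lemma polar:
  "(\<integral>x. indicator (ball 0 1) x * (norm x ^ j * g x) \<partial>lborel) = real DIM('a) / (DIM('a) + j) * I 1"
proof (cases "j = 0")
  case True
  then show ?thesis by (simp add: I_def)
next
  case False
  let ?m = "DIM('a)"
  define S where "S = {p::real\<times>'a. 0 \<le> fst p \<and> fst p \<le> norm (snd p) \<and> norm (snd p) < 1}"
  define \<psi> where "\<psi> = (\<lambda>p::real\<times>'a. indicator S p * (real j * fst p ^ (j - 1) * g (snd p)))"
  have Sb: "S \<in> sets borel"
  proof -
    have "S = {p. 0 \<le> fst p} \<inter> {p. fst p - norm (snd p) \<le> 0} \<inter> {p. norm (snd p) < 1}"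
      by (auto simp: S_def)
    moreover have "closed {p::real\<times>'a. 0 \<le> fst p}" "closed {p::real\<times>'a. fst p - norm (snd p) \<le> 0}"
      "open {p::real\<times>'a. norm (snd p) < 1}"
      by (auto intro!: closed_Collect_le open_Collect_less continuous_intros)
    ultimately show ?thesis by auto
  qed
  have meas\<psi>: "\<psi> \<in> borel_measurable (lborel \<Otimes>\<^sub>M lborel)"
  proof -
    have gs: "(\<lambda>p::real\<times>'a. g (snd p)) \<in> borel_measurable borel"
      by (subst borel_prod[symmetric]) (rule measurable_compose[OF measurable_snd meas])
    have fs: "(\<lambda>p::real\<times>'a. fst p ^ (j - 1)) \<in> borel_measurable borel"
      by (intro borel_measurable_continuous_onI continuous_intros)
    have "\<psi> \<in> borel_measurable borel"
      unfolding \<psi>_def using Sb gs fs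
      by (intro borel_measurable_times borel_measurable_indicator) (auto simp: mult.assoc[symmetric])
    then show ?thesis by (simp add: lborel_prod measurable_lborel1)
  qed
  have M0: "0 \<le> M" using bnd[of 0] by simp
  have int\<psi>: "integrable (lborel \<Otimes>\<^sub>M lborel) \<psi>"
  proof (rule Bochner_Integration.integrable_bound)
    have bd: "bounded ({0..1::real} \<times> cball (0::'a) 1)" by (simp add: bounded_Times)
    have "emeasure (lborel::(real\<times>'a) measure) ({0..1::real} \<times> cball (0::'a) 1) < \<infinity>"
      by (rule emeasure_bounded_finite[OF bd])
    then show "integrable (lborel \<Otimes>\<^sub>M lborel) (\<lambda>p. indicator ({0..1::real} \<times> cball (0::'a) 1) p * (real j * M))"
      by (intro integrable_mult_left integrable_real_indicator) (auto simp: lborel_prod)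
    show "\<psi> \<in> borel_measurable (lborel \<Otimes>\<^sub>M lborel)" by (rule meas\<psi>)
    show "AE p in lborel \<Otimes>\<^sub>M lborel. norm (\<psi> p) \<le> norm (indicator ({0..1::real} \<times> cball (0::'a) 1) p * (real j * M))"
    proof (intro AE_I2, clarify)
      fix t :: real and x :: 'a
      show "norm (\<psi> (t, x)) \<le> norm (indicator ({0..1::real} \<times> cball (0::'a) 1) (t, x) * (real j * M))"
      proof (cases "(t, x) \<in> S")
        case True
        then have t: "0 \<le> t" "t \<le> 1" "norm x < 1" by (auto simp: S_def)
        have "t ^ (j - 1) \<le> 1" using t by (simp add: power_le_one)
        then have "\<bar>real j * t ^ (j - 1) * g x\<bar> \<le> real j * 1 * M"
        proof -
          have "t ^ (j - 1) * \<bar>g x\<bar> \<le> 1 * M"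
            using t bnd[of x] M0 \<open>t ^ (j - 1) \<le> 1\<close> by (intro mult_mono) auto
          then show ?thesis using t by (simp add: abs_mult mult.assoc mult_left_mono)
        qed
        then show ?thesis using True t by (simp add: \<psi>_def indicator_def)
      qed (simp add: \<psi>_def indicator_def M0)
    qed
  qed
  have tint: "(\<integral>t. \<psi> (t, x) \<partial>lborel) = indicator (ball 0 1) x * (norm x ^ j * g x)" for x
  proof (cases "norm x < 1")
    case True
    have "(\<lambda>t. \<psi> (t, x)) = (\<lambda>t. (real j * t ^ (j - 1)) * indicator {0..norm x} t * g x)"
      using True by (auto simp: fun_eq_iff \<psi>_def S_def indicator_def)
    moreover have "(LBINT t. (real j * t ^ (j - 1)) * indicator {0..norm x} t) = norm x ^ j - 0 ^ j"
      by (rule integral_FTC_Icc_real) (auto intro!: derivative_eq_intros simp: False)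
    ultimately show ?thesis using True False by (simp add: indicator_def)
  next
    case False
    then have "(\<lambda>t. \<psi> (t, x)) = (\<lambda>t. 0)" by (auto simp: fun_eq_iff \<psi>_def S_def)
    then show ?thesis using False by simp
  qed
  have xint: "(\<integral>x. \<psi> (t, x) \<partial>lborel) = indicator {0..1} t * (real j * t ^ (j - 1)) * (1 - t ^ ?m) * I 1" for t
  proof (cases "0 \<le> t \<and> t \<le> 1")
    case True
    have "(\<lambda>x. \<psi> (t, x)) = (\<lambda>x. (real j * t ^ (j - 1)) * (indicator (ball 0 1) x * g x - indicator (ball 0 t) x * g x))"
      using True by (auto simp: fun_eq_iff \<psi>_def S_def indicator_def)
    then have "(\<integral>x. \<psi> (t, x) \<partial>lborel) = (real j * t ^ (j - 1)) * (I 1 - I t)"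
    proof (simp only:)
      have i: "integrable lborel (\<lambda>x. indicator (ball (0::'a) r) x * g x)" for r
      proof (rule Bochner_Integration.integrable_bound)
        have "emeasure lborel (ball (0::'a) r) < \<infinity>" by (rule emeasure_bounded_finite) simp
        then show "integrable lborel (\<lambda>x. indicator (ball (0::'a) r) x * M)"
          by (intro integrable_mult_left integrable_real_indicator) auto
        show "(\<lambda>x. indicator (ball (0::'a) r) x * g x) \<in> borel_measurable lborel" using meas
          by (auto simp: measurable_lborel1 intro!: borel_measurable_times borel_measurable_indicator)
        show "AE x in lborel. norm (indicator (ball (0::'a) r) x * g x) \<le> norm (indicator (ball (0::'a) r) x * M)"
          using bnd M0 by (auto simp: indicator_def)
      qed
      show "(\<integral>x. (real j * t ^ (j - 1)) * (indicator (ball 0 1) x * g x - indicator (ball 0 t) x * g x) \<partial>lborel)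
          = (real j * t ^ (j - 1)) * (I 1 - I t)"
        unfolding I_def by (simp add: Bochner_Integration.integral_diff[OF i i])
    qed
    moreover have "I t = t ^ ?m * I 1"
      using True I_scale[of t] I_0 by (cases "t = 0") auto
    ultimately show ?thesis using True by (simp add: algebra_simps)
  next
    case False
    then have "(\<lambda>x. \<psi> (t, x)) = (\<lambda>x. 0)" by (auto simp: fun_eq_iff \<psi>_def S_def)
    then show ?thesis using False by simp
  qed
  have "(\<integral>x. indicator (ball 0 1) x * (norm x ^ j * g x) \<partial>lborel) = (\<integral>x. (\<integral>t. \<psi> (t, x) \<partial>lborel) \<partial>lborel)"
    by (simp add: tint)
  also have "\<dots> = (\<integral>t. (\<integral>x. \<psi> (t, x) \<partial>lborel) \<partial>lborel)"
  proof -
    have "integrable (lborel \<Otimes>\<^sub>M lborel) (\<lambda>(t, x). \<psi> (t, x))" using int\<psi> by simp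
    from lborel_pair.Fubini_integral[of "\<lambda>t x. \<psi> (t, x)", OF this] show ?thesis by simp
  qed
  also have "\<dots> = (LBINT t. (real j * t ^ (j - 1) - real j * t ^ (j + ?m - 1)) * indicator {0..1} t) * I 1"
  proof -
    have "(\<lambda>t. (\<integral>x. \<psi> (t, x) \<partial>lborel)) = (\<lambda>t. (real j * t ^ (j - 1) - real j * t ^ (j + ?m - 1)) * indicator {0..1} t * I 1)"
    proof
      fix t
      have "j + ?m - 1 = (j - 1) + ?m" using False by simp
      then have "(t::real) ^ (j - 1) * t ^ ?m = t ^ (j + ?m - 1)" by (metis power_add)
      then show "(\<integral>x. \<psi> (t, x) \<partial>lborel) = (real j * t ^ (j - 1) - real j * t ^ (j + ?m - 1)) * indicator {0..1} t * I 1"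
        by (simp add: xint algebra_simps)
    qed
    then show ?thesis by simp
  qed
  also have "(LBINT t. (real j * t ^ (j - 1) - real j * t ^ (j + ?m - 1)) * indicator {0..1} t)
      = (1 ^ j - real j / (j + ?m) * 1 ^ (j + ?m)) - (0 ^ j - real j / (j + ?m) * 0 ^ (j + ?m))"
  proof (rule integral_FTC_Icc_real)
    fix x :: real
    have "j + ?m - 1 = Suc (j + ?m - 1) - 1" by simp
    show "((\<lambda>t. t ^ j - real j / (j + ?m) * t ^ (j + ?m)) has_real_derivative
      (real j * x ^ (j - 1) - real j * x ^ (j + ?m - 1))) (at x)"
    proof -
      have "((\<lambda>t. t ^ j - real j / (j + ?m) * t ^ (j + ?m)) has_real_derivative
        (real j * x ^ (j - 1) - real j / (j + ?m) * (real (j + ?m) * x ^ (j + ?m - 1)))) (at x)"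
        by (intro DERIV_diff DERIV_cmult DERIV_pow[unfolded One_nat_def[symmetric]])
      moreover have "real j / (j + ?m) * (real (j + ?m) * x ^ (j + ?m - 1)) = real j * x ^ (j + ?m - 1)"
        by simp
      ultimately show ?thesis by simp
    qed
  qed auto
  also have "\<dots> = real ?m / (?m + j)"
  proof -
    have z: "(0::real) ^ j = 0" "(0::real) ^ (j + ?m) = 0" using False by auto
    have "(1::real) - real j / (j + ?m) = real ?m / (?m + j)"
    proof -
      have pos: "real j + real ?m \<noteq> 0" using False by simp
      then show ?thesis by (simp add: field_simps)
    qed
    then show ?thesis by (simp only: z) simp
  qed
  finally show ?thesis .
qed

end


definition V :: "'a::euclidean_space itself \<Rightarrow> real" where
  "V _ = measure lborel (ball (0::'a) 1)"

lemma V_pos: "V TYPE('a::euclidean_space) > 0"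
  unfolding V_def using content_ball_pos[of 1 "0::'a"] by simp

lemma scale_measure_density:
  assumes "c \<ge> 0"
  shows "scale_measure (ennreal c) M = density M (\<lambda>_. ennreal c)"
proof (rule measure_eqI)
  show "sets (scale_measure (ennreal c) M) = sets (density M (\<lambda>_. ennreal c))" by simp
  fix A assume "A \<in> sets (scale_measure (ennreal c) M)"
  then have A: "A \<in> sets M" by simp
  show "emeasure (scale_measure (ennreal c) M) A = emeasure (density M (\<lambda>_. ennreal c)) A"
    using A by (simp add: emeasure_density nn_integral_cmult_indicator)
qed

lemma normalize_meas: "(\<lambda>x::'a::euclidean_space. x /\<^sub>R norm x) \<in> borel_measurable borel"
  by measurable

lemma sph_space: "space (sph :: 'a::euclidean_space measure) = sphere 0 1"
  by (simp add: sph_def)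

lemma sph_sets: "sets (sph :: 'a::euclidean_space measure) = sets (restrict_space borel (sphere (0::'a) 1))"
  by (simp add: sph_def)

lemma T_meas:
  "(\<lambda>x::'a::euclidean_space. x /\<^sub>R norm x) \<in> measurable
     (scale_measure r (restrict_space lborel (ball 0 1 - {0}))) (restrict_space borel (sphere 0 1))"
proof -
  have "(\<lambda>x::'a. x /\<^sub>R norm x) \<in> measurable (restrict_space lborel (ball 0 1 - {0})) (restrict_space borel (sphere 0 1))"
  proof (rule measurable_restrict_space2)
    show "(\<lambda>x::'a. x /\<^sub>R norm x) \<in> space (restrict_space lborel (ball 0 1 - {0})) \<rightarrow> sphere 0 1"
      by (auto simp: space_restrict_space)
    show "(\<lambda>x::'a. x /\<^sub>R norm x) \<in> measurable (restrict_space lborel (ball 0 1 - {0})) borel"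
      by (rule measurable_restrict_space1) (simp add: measurable_lborel1 normalize_meas)
  qed
  moreover have "measurable (scale_measure r (restrict_space lborel (ball 0 1 - {0}))) (restrict_space borel (sphere (0::'a) 1))
     = measurable (restrict_space lborel (ball 0 1 - {0})) (restrict_space borel (sphere (0::'a) 1))"
    by (rule measurable_cong_sets) auto
  ultimately show ?thesis by simp
qed

lemma sph_integral:
  fixes h :: "'a::euclidean_space \<Rightarrow> 'b::{banach, second_countable_topology}"
  assumes hm: "h \<in> borel_measurable borel"
  shows "(\<integral>x. h x \<partial>sph) = (1 / V TYPE('a)) *\<^sub>R (\<integral>x. indicator (ball 0 1) x *\<^sub>R h (x /\<^sub>R norm x) \<partial>lborel)"
proof -
  let ?D = "ball (0::'a) 1 - {0}"
  let ?c = "1 / V TYPE('a)"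
  have c0: "?c \<ge> 0" using V_pos[where 'a='a] by simp
  have hm': "h \<in> borel_measurable (restrict_space borel (sphere 0 1))"
    by (rule measurable_restrict_space1[OF hm])
  have "(\<integral>x. h x \<partial>sph) = (\<integral>x. h (x /\<^sub>R norm x) \<partial>(scale_measure (ennreal ?c) (restrict_space lborel ?D)))"
    unfolding sph_def V_def
    by (rule integral_distr[OF T_meas hm'])
  also have "\<dots> = (\<integral>x. h (x /\<^sub>R norm x) \<partial>(density (restrict_space lborel ?D) (\<lambda>_. ennreal ?c)))"
    by (simp add: scale_measure_density[OF c0])
  also have "\<dots> = (\<integral>x. ?c *\<^sub>R h (x /\<^sub>R norm x) \<partial>(restrict_space lborel ?D))"
  proof (rule integral_density)
    show "(\<lambda>x. h (x /\<^sub>R norm x)) \<in> borel_measurable (restrict_space lborel ?D)"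
      by (rule measurable_restrict_space1) (simp add: measurable_lborel1 measurable_compose[OF normalize_meas hm])
  qed (use c0 in auto)
  also have "\<dots> = (\<integral>x. indicator ?D x *\<^sub>R (?c *\<^sub>R h (x /\<^sub>R norm x)) \<partial>lborel)"
    by (rule integral_restrict_space) auto
  also have "\<dots> = (\<integral>x. ?c *\<^sub>R (indicator (ball 0 1) x *\<^sub>R h (x /\<^sub>R norm x)) \<partial>lborel)"
  proof (rule integral_cong_AE)
    have m: "(\<lambda>x. h (x /\<^sub>R norm x)) \<in> borel_measurable lborel"
      by (simp add: measurable_lborel1 measurable_compose[OF normalize_meas hm])
    show "(\<lambda>x. indicator ?D x *\<^sub>R (?c *\<^sub>R h (x /\<^sub>R norm x))) \<in> borel_measurable lborel"
      using m by (intro borel_measurable_scaleR borel_measurable_indicator borel_measurable_const) auto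
    show "(\<lambda>x. ?c *\<^sub>R (indicator (ball 0 1) x *\<^sub>R h (x /\<^sub>R norm x))) \<in> borel_measurable lborel"
      using m by (intro borel_measurable_scaleR borel_measurable_indicator borel_measurable_const) auto
    show "AE x in lborel. indicator ?D x *\<^sub>R (?c *\<^sub>R h (x /\<^sub>R norm x)) = ?c *\<^sub>R (indicator (ball 0 1) x *\<^sub>R h (x /\<^sub>R norm x))"
      using AE_lborel_singleton[of "0::'a"] by eventually_elim (auto simp: indicator_def)
  qed
  also have "\<dots> = ?c *\<^sub>R (\<integral>x. indicator (ball 0 1) x *\<^sub>R h (x /\<^sub>R norm x) \<partial>lborel)"
    by (rule integral_scaleR_right)
  finally show ?thesis .
qed

lemma sph_emeasure_space: "emeasure (sph :: 'a::euclidean_space measure) (space sph) = 1"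
proof -
  let ?D = "ball (0::'a) 1 - {0}"
  have "emeasure (sph :: 'a measure) (space sph) = emeasure (scale_measure (ennreal (1 / V TYPE('a))) (restrict_space lborel ?D))
      ((\<lambda>x. x /\<^sub>R norm x) -` sphere 0 1 \<inter> space (scale_measure (ennreal (1 / V TYPE('a))) (restrict_space lborel ?D)))"
  proof -
    have "sphere 0 1 = space (restrict_space borel (sphere (0::'a) 1))" by (simp add: space_restrict_space)
    then have s: "sphere 0 1 \<in> sets (restrict_space borel (sphere (0::'a) 1))" by (metis sets.top)
    show ?thesis
      unfolding sph_def V_def using s by (subst emeasure_distr[OF T_meas]) (auto simp: space_restrict_space)
  qed
  also have "(\<lambda>x. x /\<^sub>R norm x) -` sphere 0 1 \<inter> space (scale_measure (ennreal (1 / V TYPE('a))) (restrict_space lborel ?D)) = ?D"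
    by (auto simp: space_scale_measure space_restrict_space)
  also have "emeasure (scale_measure (ennreal (1 / V TYPE('a))) (restrict_space lborel ?D)) ?D
      = ennreal (1 / V TYPE('a)) * emeasure lborel ?D"
    by (simp add: emeasure_restrict_space)
  also have "emeasure lborel ?D = emeasure lborel (ball (0::'a) 1)"
    by (rule emeasure_Diff_null_set) (auto intro!: finite_imp_null_set_lborel)
  also have "emeasure lborel (ball (0::'a) 1) = ennreal (V TYPE('a))"
    unfolding V_def using emeasure_lborel_ball_finite[of "0::'a" 1] by (simp add: emeasure_eq_ennreal_measure)
  also have "ennreal (1 / V TYPE('a)) * ennreal (V TYPE('a)) = 1"
    using V_pos[where 'a='a] by (simp add: ennreal_mult[symmetric])
  finally show ?thesis .
qed

lemma sph_finite: "finite_measure (sph :: 'a::euclidean_space measure)"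
  by (rule finite_measureI) (simp add: sph_emeasure_space)


lemma relu2_deriv: "((\<lambda>r::real. (max 0 r)^2) has_real_derivative (2 * max 0 r)) (at r)"
proof -
  consider "r > 0" | "r < 0" | "r = 0" by linarith
  then show ?thesis
  proof cases
    case 1
    have "((\<lambda>r::real. r^2) has_real_derivative (2 * max 0 r)) (at r)"
      using 1 by (auto intro!: derivative_eq_intros)
    then show ?thesis
      by (rule has_field_derivative_transform_within_open[where S="{0<..}"]) (use 1 in auto)
  next
    case 2
    have "((\<lambda>r::real. 0) has_real_derivative (2 * max 0 r)) (at r)" using 2 by simp
    then show ?thesis
      by (rule has_field_derivative_transform_within_open[where S="{..<0}"]) (use 2 in auto)
  next
    case 3
    have "((\<lambda>y. ((max 0 y)^2 - (max 0 0)^2) / (y - 0)) \<longlongrightarrow> (0::real)) (at 0)"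
    proof (rule Lim_null_comparison)
      show "\<forall>\<^sub>F y in at 0. norm (((max 0 y)^2 - (max 0 0)^2) / (y - 0)) \<le> \<bar>y\<bar>"
      proof (intro always_eventually allI)
        fix y :: real
        show "norm (((max 0 y)^2 - (max 0 0)^2) / (y - 0)) \<le> \<bar>y\<bar>"
          by (cases "y > 0") (auto simp: power2_eq_square abs_mult)
      qed
      show "((\<lambda>y::real. \<bar>y\<bar>) \<longlongrightarrow> 0) (at 0)"
        using tendsto_rabs[OF tendsto_ident_at[of 0 UNIV]] by simp
    qed
    then show ?thesis using 3 by (simp add: has_field_derivative_iff)
  qed
qed

lemma hom_mult:
  assumes "homogeneous_deg d u" "homogeneous_deg e v"
  shows "homogeneous_deg (d + e) (\<lambda>x. u x * v x)"
  using assms unfolding homogeneous_deg_def by (simp add: power_add algebra_simps)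

lemma hom_norm:
  fixes w :: "'a::euclidean_space \<Rightarrow> real"
  assumes "homogeneous_deg k w" "k \<ge> 1"
  shows "w x = norm x ^ k * w (x /\<^sub>R norm x)"
proof (cases "x = 0")
  case True
  have "w (0 *\<^sub>R 0) = 0 ^ k * w 0" using assms(1) unfolding homogeneous_deg_def by blast
  then show ?thesis using True assms(2) by (simp add: power_0_left)
next
  case False
  have "w x = w (norm x *\<^sub>R (x /\<^sub>R norm x))" using False by simp
  also have "\<dots> = norm x ^ k * w (x /\<^sub>R norm x)" using assms unfolding homogeneous_deg_def by blast
  finally show ?thesis .
qed

lemma poly_cont: "real_polynomial_function p \<Longrightarrow> continuous_on S p"
  by (simp add: continuous_at_imp_continuous_on continuous_real_polymonial_function)

definition m0 :: "'a::euclidean_space \<Rightarrow> real" where "m0 x = max 0 (1 - x \<bullet> x)"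

lemma m0_cont: "continuous_on UNIV m0"
  unfolding m0_def by (intro continuous_intros)

lemma m0_zero: "1 < norm x \<Longrightarrow> m0 x = 0"
proof -
  assume "1 < norm x"
  then have "1 < norm x * norm x" by (metis less_1_mult)
  moreover have "x \<bullet> x = norm x * norm x" by (simp add: power2_norm_eq_inner[symmetric] power2_eq_square)
  ultimately show ?thesis by (simp add: m0_def)
qed

lemma weight_deriv:
  fixes G :: "'a::euclidean_space \<Rightarrow> real"
  assumes "(G has_derivative G') (at x)"
  shows "((\<lambda>x. (m0 x)^2 * G x) has_derivative
          (\<lambda>h. (m0 x)^2 * G' h + (2 * m0 x * (- 2 * (x \<bullet> h))) * G x)) (at x)"
proof -
  have i: "((\<lambda>x::'a. 1 - x \<bullet> x) has_derivative (\<lambda>h. - 2 * (x \<bullet> h))) (at x)"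
    by (auto intro!: derivative_eq_intros simp: inner_commute)
  have o: "((\<lambda>r::real. (max 0 r)^2) has_derivative (*) (2 * max 0 (1 - x \<bullet> x))) (at (1 - x \<bullet> x))"
    using relu2_deriv[of "1 - x \<bullet> x"] by (simp add: has_field_derivative_def)
  have "((\<lambda>x. (max 0 (1 - x \<bullet> x))^2) has_derivative (\<lambda>h. (2 * max 0 (1 - x \<bullet> x)) * (- 2 * (x \<bullet> h)))) (at x)"
    using has_derivative_compose[OF i o] by (simp add: o_def)
  then have w: "((\<lambda>x. (m0 x)^2) has_derivative (\<lambda>h. 2 * m0 x * (- 2 * (x \<bullet> h)))) (at x)"
    unfolding m0_def by (simp add: algebra_simps)
  show ?thesis
    using has_derivative_mult[OF w assms] by (simp add: algebra_simps)
qed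

lemma ibp_weighted:
  fixes u v :: "'a::euclidean_space \<Rightarrow> real"
  assumes u: "harm_hom_poly d u" and v: "harm_hom_poly e v" and de: "d \<noteq> e"
  shows "(\<integral>x. m0 x * (u x * v x) \<partial>lborel) = 0"
proof -
  define G where "G \<equiv> \<lambda>b x. u x * pd v x b - v x * pd u x b"
  have Gp: "real_polynomial_function (G b)" for b
    unfolding G_def by (rule green_div(1)[OF u v])
  have Gdiv: "(\<Sum>b\<in>Basis. pd (G b) x b) = 0" for x
    unfolding G_def by (rule green_div(3)[OF u v])
  have Geul: "(\<Sum>b\<in>Basis. (x \<bullet> b) * G b x) = (real e - real d) * (u x * v x)" for x
    unfolding G_def by (rule green_div(4)[OF u v])
  define H' where "H' \<equiv> \<lambda>b x h. (m0 x)^2 * pd (G b) x h + (2 * m0 x * (- 2 * (x \<bullet> h))) * G b x"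
  have ib: "integrable lborel (\<lambda>x. H' b x b) \<and> (\<integral>x. H' b x b \<partial>lborel) = 0" for b :: 'a
  proof -
    have der: "((\<lambda>x. (m0 x)^2 * G b x) has_derivative H' b x) (at x)" for x
      unfolding H'_def by (rule weight_deriv[OF pd(1)[OF Gp]])
    have cont: "continuous_on UNIV (\<lambda>x. H' b x b)"
      unfolding H'_def
      by (intro continuous_intros m0_cont poly_cont pd(2)[OF Gp] Gp)
    have s1: "1 < norm x \<Longrightarrow> (m0 x)^2 * G b x = 0" for x by (simp add: m0_zero)
    have s2: "1 < norm x \<Longrightarrow> H' b x b = 0" for x by (simp add: H'_def m0_zero)
    show ?thesis using ibp_zero[OF der cont s1 s2] by blast
  qed
  have "(\<integral>x. (\<Sum>b\<in>Basis. H' b x b) \<partial>lborel) = (\<Sum>b\<in>Basis. (\<integral>x. H' b x b \<partial>lborel))"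
    by (rule Bochner_Integration.integral_sum) (use ib in blast)
  also have "\<dots> = 0" using ib by simp
  finally have z: "(\<integral>x. (\<Sum>b\<in>Basis. H' b x b) \<partial>lborel) = 0" .
  have pt: "(\<Sum>b\<in>Basis. H' b x b) = (- 4 * (real e - real d)) * (m0 x * (u x * v x))" for x
  proof -
    have "(\<Sum>b\<in>Basis. H' b x b) = (m0 x)^2 * (\<Sum>b\<in>Basis. pd (G b) x b) + (- 4 * m0 x) * (\<Sum>b\<in>Basis. (x \<bullet> b) * G b x)"
      by (simp add: H'_def sum.distrib[symmetric] sum_distrib_left algebra_simps sum_negf[symmetric])
    also have "\<dots> = (- 4 * (real e - real d)) * (m0 x * (u x * v x))"
      by (simp only: Gdiv Geul) (simp add: algebra_simps)
    finally show ?thesis .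
  qed
  have "(\<integral>x. (- 4 * (real e - real d)) * (m0 x * (u x * v x)) \<partial>lborel) = 0"
    using z by (simp add: pt)
  then have "(- 4 * (real e - real d)) * (\<integral>x. m0 x * (u x * v x) \<partial>lborel) = 0" by simp
  moreover have "- 4 * (real e - real d) \<noteq> 0" using de by simp
  ultimately show ?thesis by simp
qed


lemma orth_real:
  fixes u v :: "'a::euclidean_space \<Rightarrow> real"
  assumes u: "harm_hom_poly d u" and v: "harm_hom_poly e v" and de: "d \<noteq> e"
  shows "(\<integral>x. u x * v x \<partial>sph) = 0"
proof -
  have pu: "real_polynomial_function u" and pv: "real_polynomial_function v"
    and hu: "homogeneous_deg d u" and hv: "homogeneous_deg e v"
    using u v unfolding harm_hom_poly_def by auto
  define k where "k = d + e"
  have k1: "k \<ge> 1" using de unfolding k_def by simp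
  define w where "w = (\<lambda>x. u x * v x)"
  have hw: "homogeneous_deg k w" unfolding w_def k_def by (rule hom_mult[OF hu hv])
  have pw: "real_polynomial_function w" unfolding w_def using pu pv by (intro real_polynomial_function.intros(4))
  have cw: "continuous_on UNIV w" by (rule poly_cont[OF pw])
  define g where "g = (\<lambda>x. w (x /\<^sub>R norm x))"
  have "compact (w ` cball 0 1)"
    by (rule compact_continuous_image) (auto intro: continuous_on_subset[OF cw])
  then obtain M where M: "\<And>y. y \<in> w ` cball 0 1 \<Longrightarrow> norm y \<le> M"
    using compact_imp_bounded bounded_iff by metis
  have gm: "g \<in> borel_measurable borel"
    unfolding g_def by (rule measurable_compose[OF normalize_meas borel_measurable_continuous_onI[OF cw]])
  have gb: "\<bar>g x\<bar> \<le> M" for x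
  proof -
    have "norm (x /\<^sub>R norm x) \<le> 1" by (cases "x = 0") auto
    then show ?thesis using M[of "g x"] unfolding g_def by auto
  qed
  have gh: "g (c *\<^sub>R x) = g x" if "c > 0" for c x
    using that unfolding g_def by (cases "x = 0") (auto simp: divide_simps)
  interpret hom0 g M using gm gb gh by unfold_locales auto
  let ?m = "DIM('a)"
  have pt: "m0 x * (u x * v x) = indicator (ball 0 1) x * (norm x ^ k * g x) - indicator (ball 0 1) x * (norm x ^ (k + 2) * g x)" for x :: 'a
  proof -
    have wx: "u x * v x = norm x ^ k * g x" using hom_norm[OF hw k1, of x] unfolding g_def w_def by simp
    have xx: "x \<bullet> x = (norm x)^2" by (simp add: power2_norm_eq_inner)
    show ?thesis
    proof (cases "norm x < 1")
      case True
      then have "(norm x)^2 < 1" by (simp add: power_less_one_iff abs_square_less_1)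
      then have mm: "m0 x = 1 - (norm x)^2" by (simp add: m0_def xx)
      have p: "norm x ^ (k + 2) = norm x ^ k * (norm x)^2" by (rule power_add)
      have "m0 x * (u x * v x) = (1 - (norm x)^2) * (norm x ^ k * g x)" using mm wx by simp
      also have "\<dots> = norm x ^ k * g x - norm x ^ (k + 2) * g x" unfolding p by (simp add: algebra_simps)
      finally show ?thesis using True by simp
    next
      case False
      then have "1 \<le> (norm x)^2" by (simp add: one_le_power)
      then have "m0 x = 0" by (simp add: m0_def xx)
      then show ?thesis using False by simp
    qed
  qed
  have "0 = (\<integral>x. m0 x * (u x * v x) \<partial>lborel)" using ibp_weighted[OF u v de] by simp
  also have "\<dots> = (\<integral>x. indicator (ball 0 1) x * (norm x ^ k * g x) - indicator (ball 0 1) x * (norm x ^ (k + 2) * g x) \<partial>lborel)"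
    by (simp add: pt)
  also have "\<dots> = real ?m / (?m + k) * I 1 - real ?m / (?m + (k + 2)) * I 1"
    by (simp only: Bochner_Integration.integral_diff[OF int_pow int_pow] polar)
  also have "\<dots> = (real ?m / (?m + k) - real ?m / (?m + (k + 2))) * I 1" by (simp add: algebra_simps)
  finally have z: "(real ?m / (?m + k) - real ?m / (?m + (k + 2))) * I 1 = 0" by simp
  have "real ?m / (?m + (k + 2)) < real ?m / (?m + k)"
  proof (rule divide_strict_left_mono)
    have "0 < real ?m + real k" using DIM_positive[where 'a='a] by linarith
    then show "0 < real (?m + (k + 2)) * real (?m + k)" by (intro mult_pos_pos) auto
  qed auto
  then have I1: "I 1 = 0" using z by simp
  have "(\<integral>x. u x * v x \<partial>sph) = (\<integral>x. w x \<partial>sph)" unfolding w_def ..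
  also have "\<dots> = (1 / V TYPE('a)) *\<^sub>R (\<integral>x. indicator (ball 0 1) x *\<^sub>R w (x /\<^sub>R norm x) \<partial>lborel)"
    by (rule sph_integral[OF borel_measurable_continuous_onI[OF cw]])
  also have "\<dots> = (1 / V TYPE('a)) * I 1" unfolding I_eq unfolding g_def by simp
  finally show ?thesis using I1 by simp
qed


lemma L2_prod_integrable:
  fixes f g :: "'a \<Rightarrow> complex"
  assumes "f \<in> borel_measurable M" "g \<in> borel_measurable M"
    "integrable M (\<lambda>x. (cmod (f x))^2)" "integrable M (\<lambda>x. (cmod (g x))^2)"
  shows "integrable M (\<lambda>x. f x * cnj (g x))"
proof (rule Bochner_Integration.integrable_bound)
  show "integrable M (\<lambda>x. (cmod (f x))^2 + (cmod (g x))^2)" using assms by auto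
  have "(\<lambda>x. cnj (g x)) \<in> borel_measurable M"
    by (rule measurable_compose[OF assms(2)]) (intro borel_measurable_continuous_onI continuous_intros)
  then show "(\<lambda>x. f x * cnj (g x)) \<in> borel_measurable M" using assms by (intro borel_measurable_times)
  show "AE x in M. norm (f x * cnj (g x)) \<le> norm ((cmod (f x))^2 + (cmod (g x))^2)"
  proof (intro AE_I2)
    fix x
    have "cmod (f x) * cmod (g x) \<le> (cmod (f x))^2 + (cmod (g x))^2"
    proof -
      have "0 \<le> (cmod (f x) - cmod (g x))^2" by simp
      then have a: "2 * (cmod (f x) * cmod (g x)) \<le> cmod (f x) * cmod (f x) + cmod (g x) * cmod (g x)"
        by (simp add: power2_eq_square algebra_simps)
      have b: "0 \<le> cmod (f x) * cmod (g x)" by simp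
      from a b show ?thesis unfolding power2_eq_square by linarith
    qed
    then show "norm (f x * cnj (g x)) \<le> norm ((cmod (f x))^2 + (cmod (g x))^2)"
      by (simp add: norm_mult)
  qed
qed

lemma bessel:
  fixes F :: "'a \<Rightarrow> complex" and \<phi> :: "'i \<Rightarrow> 'a \<Rightarrow> complex"
  assumes J: "finite J"
    and Fm: "F \<in> borel_measurable M" and F2: "integrable M (\<lambda>x. (cmod (F x))^2)"
    and \<phi>m: "\<And>i. i \<in> J \<Longrightarrow> \<phi> i \<in> borel_measurable M"
    and \<phi>2: "\<And>i. i \<in> J \<Longrightarrow> integrable M (\<lambda>x. (cmod (\<phi> i x))^2)"
    and orth: "\<And>i j. i \<in> J \<Longrightarrow> j \<in> J \<Longrightarrow> (\<integral>x. \<phi> i x * cnj (\<phi> j x) \<partial>M) = (if i = j then 1 else 0)"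
  shows "(\<Sum>i\<in>J. (cmod (\<integral>x. F x * cnj (\<phi> i x) \<partial>M))^2) \<le> (\<integral>x. (cmod (F x))^2 \<partial>M)"
proof -
  define c where "c i = (\<integral>x. F x * cnj (\<phi> i x) \<partial>M)" for i
  define R where "R x = F x - (\<Sum>i\<in>J. c i * \<phi> i x)" for x
  have iF\<phi>: "integrable M (\<lambda>x. F x * cnj (\<phi> i x))" if "i \<in> J" for i
    using L2_prod_integrable[OF Fm \<phi>m[OF that] F2 \<phi>2[OF that]] .
  have i\<phi>F: "integrable M (\<lambda>x. \<phi> i x * cnj (F x))" if "i \<in> J" for i
    using L2_prod_integrable[OF \<phi>m[OF that] Fm \<phi>2[OF that] F2] .
  have i\<phi>\<phi>: "integrable M (\<lambda>x. \<phi> i x * cnj (\<phi> j x))" if "i \<in> J" "j \<in> J" for i j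
    using L2_prod_integrable[OF \<phi>m[OF that(1)] \<phi>m[OF that(2)] \<phi>2[OF that(1)] \<phi>2[OF that(2)]] .
  have iFF: "integrable M (\<lambda>x. F x * cnj (F x))"
    using L2_prod_integrable[OF Fm Fm F2 F2] .
  have pt: "R x * cnj (R x) = F x * cnj (F x) - (\<Sum>j\<in>J. cnj (c j) * (F x * cnj (\<phi> j x)))
      - (\<Sum>i\<in>J. c i * (\<phi> i x * cnj (F x)))
      + (\<Sum>i\<in>J. \<Sum>j\<in>J. (c i * cnj (c j)) * (\<phi> i x * cnj (\<phi> j x)))" for x
    unfolding R_def
    apply (simp add: algebra_simps sum_distrib_left sum_distrib_right sum_subtractf cnj_sum sum.distrib
                  sum_negf)
    apply (rule sum.swap)
    done
  have i1: "integrable M (\<lambda>x. \<Sum>j\<in>J. cnj (c j) * (F x * cnj (\<phi> j x)))"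
    using iF\<phi> by (intro Bochner_Integration.integrable_sum integrable_mult_right) auto
  have i2: "integrable M (\<lambda>x. \<Sum>i\<in>J. c i * (\<phi> i x * cnj (F x)))"
    using i\<phi>F by (intro Bochner_Integration.integrable_sum integrable_mult_right) auto
  have i3: "integrable M (\<lambda>x. \<Sum>i\<in>J. \<Sum>j\<in>J. (c i * cnj (c j)) * (\<phi> i x * cnj (\<phi> j x)))"
    using i\<phi>\<phi> by (intro Bochner_Integration.integrable_sum integrable_mult_right) auto
  have e1: "(\<integral>x. (\<Sum>j\<in>J. cnj (c j) * (F x * cnj (\<phi> j x))) \<partial>M) = (\<Sum>j\<in>J. cnj (c j) * c j)"
    using iF\<phi> by (subst Bochner_Integration.integral_sum) (auto simp: c_def)
  have e2: "(\<integral>x. (\<Sum>i\<in>J. c i * (\<phi> i x * cnj (F x))) \<partial>M) = (\<Sum>i\<in>J. c i * cnj (c i))"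
  proof -
    have "(\<integral>x. \<phi> i x * cnj (F x) \<partial>M) = cnj (c i)" for i
      unfolding c_def by (subst Bochner_Integration.integral_cnj[symmetric]) (simp add: mult.commute)
    then show ?thesis using i\<phi>F by (subst Bochner_Integration.integral_sum) auto
  qed
  have e3: "(\<integral>x. (\<Sum>i\<in>J. \<Sum>j\<in>J. (c i * cnj (c j)) * (\<phi> i x * cnj (\<phi> j x))) \<partial>M) = (\<Sum>i\<in>J. c i * cnj (c i))"
  proof -
    have "(\<integral>x. (\<Sum>i\<in>J. \<Sum>j\<in>J. (c i * cnj (c j)) * (\<phi> i x * cnj (\<phi> j x))) \<partial>M)
        = (\<Sum>i\<in>J. \<Sum>j\<in>J. (c i * cnj (c j)) * (if i = j then 1 else 0))"
      using i\<phi>\<phi> orth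
      by (subst Bochner_Integration.integral_sum, force intro!: Bochner_Integration.integrable_sum integrable_mult_right)
         (auto intro!: sum.cong simp: Bochner_Integration.integral_sum)
    also have "\<dots> = (\<Sum>i\<in>J. c i * cnj (c i))"
      using J by (simp add: if_distrib sum.delta cong: if_cong)
    finally show ?thesis .
  qed
  have cc: "c i * cnj (c i) = complex_of_real ((cmod (c i))^2)" for i
    by (rule complex_norm_square[symmetric])
  have "complex_of_real (\<integral>x. (cmod (R x))^2 \<partial>M) = (\<integral>x. complex_of_real ((cmod (R x))^2) \<partial>M)"
    by (rule integral_complex_of_real[symmetric])
  also have "\<dots> = (\<integral>x. R x * cnj (R x) \<partial>M)"
    by (simp only: complex_norm_square)
  also have "\<dots> = (\<integral>x. F x * cnj (F x) \<partial>M) - (\<Sum>j\<in>J. cnj (c j) * c j) - (\<Sum>i\<in>J. c i * cnj (c i))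
        + (\<Sum>i\<in>J. c i * cnj (c i))"
    unfolding pt
    using iFF i1 i2 i3 e1 e2 e3
    by (simp add: Bochner_Integration.integral_diff Bochner_Integration.integral_add)
  also have "\<dots> = complex_of_real ((\<integral>x. (cmod (F x))^2 \<partial>M) - (\<Sum>i\<in>J. (cmod (c i))^2))"
  proof -
    have FF: "(\<integral>x. F x * cnj (F x) \<partial>M) = complex_of_real (\<integral>x. (cmod (F x))^2 \<partial>M)"
      by (simp only: complex_norm_square[symmetric] integral_complex_of_real)
    have "(\<Sum>j\<in>J. cnj (c j) * c j) = (\<Sum>j\<in>J. complex_of_real ((cmod (c j))^2))"
      by (simp only: cc mult.commute[of "cnj _"])
    then show ?thesis unfolding FF cc by simp
  qed
  finally have "(\<integral>x. (cmod (R x))^2 \<partial>M) = (\<integral>x. (cmod (F x))^2 \<partial>M) - (\<Sum>i\<in>J. (cmod (c i))^2)"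
    using of_real_eq_iff by blast
  moreover have "0 \<le> (\<integral>x. (cmod (R x))^2 \<partial>M)" by (rule Bochner_Integration.integral_nonneg) simp
  ultimately show ?thesis unfolding c_def by simp
qed

lemma cauchy_schwarz_L2:
  fixes F g :: "'a \<Rightarrow> complex"
  assumes Fm: "F \<in> borel_measurable M" and gm: "g \<in> borel_measurable M"
    and F2: "integrable M (\<lambda>x. (cmod (F x))^2)" and g2: "integrable M (\<lambda>x. (cmod (g x))^2)"
    and pos: "0 < (\<integral>x. (cmod (g x))^2 \<partial>M)"
  shows "(cmod (\<integral>x. F x * cnj (g x) \<partial>M))^2 \<le> (\<integral>x. (cmod (F x))^2 \<partial>M) * (\<integral>x. (cmod (g x))^2 \<partial>M)"
proof -
  define A where "A = (\<integral>x. (cmod (g x))^2 \<partial>M)"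
  define c where "c = sqrt A"
  have c0: "c > 0" using pos unfolding c_def A_def by simp
  have cc: "c * c = A" using pos unfolding c_def A_def by simp
  define \<phi> where "\<phi> = (\<lambda>(_::unit) x. g x / complex_of_real c)"
  have \<phi>m: "\<phi> i \<in> borel_measurable M" for i unfolding \<phi>_def using gm by auto
  have \<phi>2: "integrable M (\<lambda>x. (cmod (\<phi> i x))^2)" for i
    unfolding \<phi>_def using g2 c0 by (simp add: norm_divide power_divide)
  have orth: "(\<integral>x. \<phi> i x * cnj (\<phi> j x) \<partial>M) = (if i = j then 1 else 0)" for i j
  proof -
    have "(\<integral>x. \<phi> i x * cnj (\<phi> j x) \<partial>M) = (\<integral>x. complex_of_real ((cmod (g x))^2) / complex_of_real (c * c) \<partial>M)"
    proof -
      have "\<phi> i x * cnj (\<phi> j x) = complex_of_real ((cmod (g x))^2) / complex_of_real (c * c)" for x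
        unfolding \<phi>_def complex_norm_square by (simp add: field_simps)
      then show ?thesis by simp
    qed
    also have "\<dots> = complex_of_real A / complex_of_real (c * c)"
      unfolding A_def by (simp only: integral_divide_zero integral_complex_of_real)
    also have "\<dots> = 1" using cc c0 pos unfolding A_def by simp
    finally show ?thesis by simp
  qed
  have "(\<Sum>i\<in>{()}. (cmod (\<integral>x. F x * cnj (\<phi> i x) \<partial>M))^2) \<le> (\<integral>x. (cmod (F x))^2 \<partial>M)"
    by (rule bessel[OF _ Fm F2 \<phi>m \<phi>2 orth]) auto
  moreover have "(\<integral>x. F x * cnj (\<phi> () x) \<partial>M) = (\<integral>x. F x * cnj (g x) \<partial>M) / complex_of_real c"
    unfolding \<phi>_def by simp
  ultimately have "(cmod (\<integral>x. F x * cnj (g x) \<partial>M))^2 / (c * c) \<le> (\<integral>x. (cmod (F x))^2 \<partial>M)"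
    using c0 by (simp add: norm_divide power_divide power2_eq_square)
  then show ?thesis using cc c0 pos unfolding A_def by (simp add: divide_le_eq mult.commute split: if_splits)
qed


lemma sph_harm_rep:
  assumes "h \<in> sph_harm d"
  obtains p q where "harm_hom_poly d p" "harm_hom_poly d q" "\<And>x. x \<in> sphere 0 1 \<Longrightarrow> h x = Complex (p x) (q x)"
  using assms unfolding sph_harm_def by blast

lemma poly_integrable_sph:
  fixes p :: "'a::euclidean_space \<Rightarrow> real"
  assumes "real_polynomial_function p"
  shows "integrable sph p"
proof -
  have c: "continuous_on UNIV p" by (rule poly_cont[OF assms])
  have "compact (p ` sphere 0 1)" by (rule compact_continuous_image) (auto intro: continuous_on_subset[OF c])
  then obtain M where M: "\<And>y. y \<in> p ` sphere 0 1 \<Longrightarrow> norm y \<le> M"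
    using compact_imp_bounded bounded_iff by metis
  show ?thesis
  proof (rule finite_measure.integrable_const_bound[OF sph_finite])
    show "AE x in sph. norm (p x) \<le> M" using M by (intro AE_I2) (auto simp: sph_space)
    show "p \<in> borel_measurable sph"
      by (subst measurable_cong_sets[OF sph_sets refl]) (rule measurable_restrict_space1[OF borel_measurable_continuous_onI[OF c]])
  qed
qed

lemma harm_poly: "harm_hom_poly d p \<Longrightarrow> real_polynomial_function p"
  unfolding harm_hom_poly_def by simp

lemma orth_complex:
  fixes h h' :: "'a::euclidean_space \<Rightarrow> complex"
  assumes "h \<in> sph_harm d" "h' \<in> sph_harm d'" "d \<noteq> d'"
  shows "(\<integral>x. h x * cnj (h' x) \<partial>sph) = 0"
proof -
  obtain p q where p: "harm_hom_poly d p" and q: "harm_hom_poly d q" and h: "\<And>x. x \<in> sphere 0 1 \<Longrightarrow> h x = Complex (p x) (q x)"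
    using sph_harm_rep[OF assms(1)] by blast
  obtain p' q' where p': "harm_hom_poly d' p'" and q': "harm_hom_poly d' q'" and h': "\<And>x. x \<in> sphere 0 1 \<Longrightarrow> h' x = Complex (p' x) (q' x)"
    using sph_harm_rep[OF assms(2)] by blast
  have ip: "integrable sph (\<lambda>x. a x * b x)" if "real_polynomial_function a" "real_polynomial_function b" for a b :: "'a \<Rightarrow> real"
    by (rule poly_integrable_sph) (use that in \<open>intro real_polynomial_function.intros(4)\<close>)
  have "(\<integral>x. h x * cnj (h' x) \<partial>sph) =
     (\<integral>x. (complex_of_real (p x * p' x) + complex_of_real (q x * q' x))
          + \<i> * (complex_of_real (q x * p' x) - complex_of_real (p x * q' x)) \<partial>sph)"
  proof (rule Bochner_Integration.integral_cong[OF refl])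
    fix x assume "x \<in> space (sph::'a measure)"
    then have "x \<in> sphere 0 1" by (simp add: sph_space)
    then show "h x * cnj (h' x) = (complex_of_real (p x * p' x) + complex_of_real (q x * q' x))
          + \<i> * (complex_of_real (q x * p' x) - complex_of_real (p x * q' x))"
      by (simp add: h h' complex_eq_iff)
  qed
  also have "\<dots> = (complex_of_real (\<integral>x. p x * p' x \<partial>sph) + complex_of_real (\<integral>x. q x * q' x \<partial>sph))
          + \<i> * (complex_of_real (\<integral>x. q x * p' x \<partial>sph) - complex_of_real (\<integral>x. p x * q' x \<partial>sph))"
    using ip[OF harm_poly[OF p] harm_poly[OF p']] ip[OF harm_poly[OF q] harm_poly[OF q']]
      ip[OF harm_poly[OF q] harm_poly[OF p']] ip[OF harm_poly[OF p] harm_poly[OF q']]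
  proof -
    let ?c = "\<lambda>f::'a\<Rightarrow>real. \<lambda>x. complex_of_real (f x)"
    have I1: "integrable sph (?c (\<lambda>x. p x * p' x))" "integrable sph (?c (\<lambda>x. q x * q' x))"
      "integrable sph (?c (\<lambda>x. q x * p' x))" "integrable sph (?c (\<lambda>x. p x * q' x))"
      by (rule integrable_of_real[OF ip[OF harm_poly[OF p] harm_poly[OF p']]],
          rule integrable_of_real[OF ip[OF harm_poly[OF q] harm_poly[OF q']]],
          rule integrable_of_real[OF ip[OF harm_poly[OF q] harm_poly[OF p']]],
          rule integrable_of_real[OF ip[OF harm_poly[OF p] harm_poly[OF q']]])
    have s1: "(\<integral>x. (complex_of_real (p x * p' x) + complex_of_real (q x * q' x))
          + \<i> * (complex_of_real (q x * p' x) - complex_of_real (p x * q' x)) \<partial>sph)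
        = (\<integral>x. complex_of_real (p x * p' x) + complex_of_real (q x * q' x) \<partial>sph)
          + (\<integral>x. \<i> * (complex_of_real (q x * p' x) - complex_of_real (p x * q' x)) \<partial>sph)"
      by (rule Bochner_Integration.integral_add)
         (rule Bochner_Integration.integrable_add[OF I1(1,2)],
          rule integrable_mult_right, rule Bochner_Integration.integrable_diff[OF I1(3,4)])
    have s2: "(\<integral>x. complex_of_real (p x * p' x) + complex_of_real (q x * q' x) \<partial>sph)
        = (\<integral>x. complex_of_real (p x * p' x) \<partial>sph) + (\<integral>x. complex_of_real (q x * q' x) \<partial>sph)"
      by (rule Bochner_Integration.integral_add[OF I1(1,2)])
    have s3: "(\<integral>x. \<i> * (complex_of_real (q x * p' x) - complex_of_real (p x * q' x)) \<partial>sph)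
        = \<i> * ((\<integral>x. complex_of_real (q x * p' x) \<partial>sph) - (\<integral>x. complex_of_real (p x * q' x) \<partial>sph))"
      by (simp only: integral_mult_right_zero Bochner_Integration.integral_diff[OF I1(3) I1(4)])
    show ?thesis unfolding s1 s2 s3 integral_complex_of_real ..
  qed
  also have "\<dots> = 0"
    using orth_real[OF p p' assms(3)] orth_real[OF q q' assms(3)] orth_real[OF q p' assms(3)] orth_real[OF p q' assms(3)]
    by simp
  finally show ?thesis .
qed

lemma sph_harm_props:
  fixes h :: "'a::euclidean_space \<Rightarrow> complex"
  assumes "h \<in> sph_harm d"
  shows "h \<in> borel_measurable sph" "\<exists>M. \<forall>x\<in>sphere 0 1. cmod (h x) \<le> M"
proof -
  obtain p q where p: "harm_hom_poly d p" and q: "harm_hom_poly d q" and h: "\<And>x. x \<in> sphere 0 1 \<Longrightarrow> h x = Complex (p x) (q x)"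
    using sph_harm_rep[OF assms(1)] by blast
  have c: "continuous_on UNIV (\<lambda>x. Complex (p x) (q x))"
  proof -
    have "(\<lambda>x. Complex (p x) (q x)) = (\<lambda>x. complex_of_real (p x) + \<i> * complex_of_real (q x))"
      by (auto simp: complex_eq_iff)
    then show ?thesis using poly_cont[OF harm_poly[OF p]] poly_cont[OF harm_poly[OF q]]
      by (auto intro!: continuous_intros)
  qed
  have "(\<lambda>x. Complex (p x) (q x)) \<in> borel_measurable sph"
    by (subst measurable_cong_sets[OF sph_sets refl]) (rule measurable_restrict_space1[OF borel_measurable_continuous_onI[OF c]])
  then show "h \<in> borel_measurable sph"
    by (rule measurable_cong[THEN iffD1, rotated]) (auto simp: sph_space h)
  have "compact ((\<lambda>x. Complex (p x) (q x)) ` sphere 0 1)"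
    by (rule compact_continuous_image) (auto intro: continuous_on_subset[OF c])
  then obtain M where M: "\<And>y. y \<in> (\<lambda>x. Complex (p x) (q x)) ` sphere 0 1 \<Longrightarrow> norm y \<le> M"
    using compact_imp_bounded bounded_iff by metis
  then show "\<exists>M. \<forall>x\<in>sphere 0 1. cmod (h x) \<le> M" using h by (intro exI[of _ M]) auto
qed

lemma onb_orthonormal:
  assumes "is_sph_onb N \<psi>" "l < N d" "l' < N d'"
  shows "(\<integral>x. \<psi> d l x * cnj (\<psi> d' l' x) \<partial>sph) = (if (d, l) = (d', l') then 1 else 0)"
proof (cases "d = d'")
  case True
  then show ?thesis using assms unfolding is_sph_onb_def by auto
next
  case False
  have "\<psi> d l \<in> sph_harm d" "\<psi> d' l' \<in> sph_harm d'" using assms unfolding is_sph_onb_def by auto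
  then show ?thesis using orth_complex False by auto
qed


lemma powr_tail:
  fixes p r :: real
  assumes p: "p < -1" and r: "r > 0"
  shows "integrable lborel (\<lambda>y. indicator {r..} y * y powr p)"
    "(\<integral>y. indicator {r..} y * y powr p \<partial>lborel) = r powr (p + 1) / (- (p + 1))"
proof -
  have "(\<integral>\<^sup>+y\<in>{r..}. ennreal (y powr p) \<partial>lborel) = ennreal (0 - r powr (p + 1) / (p + 1))"
  proof (rule nn_integral_FTC_atLeast)
    show "(\<lambda>y. y powr p) \<in> borel_measurable borel" by measurable
    fix x assume "r \<le> x"
    then have x: "x > 0" using r by simp
    have "((\<lambda>y. y powr (p + 1) / (p + 1)) has_real_derivative ((p + 1) * x powr (p + 1 - 1)) / (p + 1)) (at x)"
      by (intro DERIV_cdivide has_real_derivative_powr x)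
    then show "((\<lambda>y. y powr (p + 1) / (p + 1)) has_real_derivative x powr p) (at x)"
      using p by simp
    show "0 \<le> x powr p" by simp
  next
    have "((\<lambda>y. y powr (p + 1)) \<longlongrightarrow> 0) at_top"
      using p by (intro tendsto_neg_powr filterlim_ident) auto
    then show "((\<lambda>y. y powr (p + 1) / (p + 1)) \<longlongrightarrow> 0) at_top"
      using tendsto_divide_zero by blast
  qed
  moreover have "(\<integral>\<^sup>+y\<in>{r..}. ennreal (y powr p) \<partial>lborel) = (\<integral>\<^sup>+y. ennreal (indicator {r..} y * y powr p) \<partial>lborel)"
    by (intro nn_integral_cong) (auto simp: indicator_def)
  moreover have "0 - r powr (p + 1) / (p + 1) = r powr (p + 1) / (- (p + 1))"
    by (simp add: minus_divide_right)
  ultimately have e: "(\<integral>\<^sup>+y. ennreal (indicator {r..} y * y powr p) \<partial>lborel) = ennreal (r powr (p + 1) / (- (p + 1)))"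
    by metis
  have nn: "0 \<le> r powr (p + 1) / (- (p + 1))" using p by simp
  have "integrable lborel (\<lambda>y. indicator {r..} y * y powr p) \<and>
        (\<integral>y. indicator {r..} y * y powr p \<partial>lborel) = r powr (p + 1) / (- (p + 1))"
    by (rule nn_integral_eq_integrable[THEN iffD1, OF _ _ nn e]) auto
  then show "integrable lborel (\<lambda>y. indicator {r..} y * y powr p)"
    "(\<integral>y. indicator {r..} y * y powr p \<partial>lborel) = r powr (p + 1) / (- (p + 1))" by auto
qed

lemma Pd_bounds:
  assumes "real n / 2 < s" "s < real n"
  shows "0 \<le> Pd n d s" "Pd n d s \<le> 1"
proof -
  have f: "0 \<le> (real n - s + real i) / (s + real i) \<and> (real n - s + real i) / (s + real i) \<le> 1" for i
  proof -
    have "s > 0" using assms by linarith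
    then show ?thesis using assms by (auto simp: divide_le_eq_1)
  qed
  show "0 \<le> Pd n d s" unfolding Pd_def using f by (intro prod_nonneg) auto
  show "Pd n d s \<le> 1" unfolding Pd_def using f by (intro prod_le_1) auto
qed


lemma lcone_eq: "(lcone :: ('a::euclidean_space \<times> real) set) = {p. norm (fst p) = snd p} \<inter> {p. 0 < snd p}"
  unfolding lcone_def by auto

lemma lcone_borel: "(lcone :: ('a::euclidean_space \<times> real) set) \<in> sets borel"
proof -
  have l2: "closed {p::'a\<times>real. norm (fst p) = snd p}"
    by (intro closed_Collect_eq continuous_intros)
  have l3: "open {p::'a\<times>real. 0 < snd p}"
    by (intro open_Collect_less continuous_intros)
  show ?thesis unfolding lcone_eq using l2 l3 by (intro sets.Int borel_closed borel_open)
qed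

lemma sph_id_meas: "(\<lambda>x. x) \<in> measurable (sph::'a::euclidean_space measure) borel"
  by (subst measurable_cong_sets[OF sph_sets refl]) (rule measurable_restrict_space1, rule measurable_ident_sets, rule refl)

lemma T_meas2: "(\<lambda>p::real \<times> 'a::euclidean_space. ((1 / fst p) *\<^sub>R snd p, 1 / fst p)) \<in> measurable (lborel \<Otimes>\<^sub>M sph) borel"
proof -
  have s: "(\<lambda>p::real\<times>'a. snd p) \<in> measurable (lborel \<Otimes>\<^sub>M sph) borel"
    by (rule measurable_compose[OF measurable_snd sph_id_meas])
  have f: "(\<lambda>p::real\<times>'a. fst p) \<in> measurable (lborel \<Otimes>\<^sub>M sph) borel"
    using measurable_fst[of lborel sph] by (simp add: measurable_lborel2)
  have "(\<lambda>p::real\<times>'a. 1 / fst p) \<in> borel_measurable (lborel \<Otimes>\<^sub>M sph)"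
    using f by (intro borel_measurable_divide borel_measurable_const)
  then have "(\<lambda>p::real\<times>'a. ((1 / fst p) *\<^sub>R snd p, 1 / fst p)) \<in> measurable (lborel \<Otimes>\<^sub>M sph) (borel \<Otimes>\<^sub>M borel)"
    using s by (intro measurable_Pair borel_measurable_scaleR)
  then show ?thesis by (simp add: borel_prod)
qed

locale cfg =
  fixes N :: "nat \<Rightarrow> nat" and \<psi> :: "nat \<Rightarrow> nat \<Rightarrow> 'a::euclidean_space \<Rightarrow> complex"
    and f :: "'a \<times> real \<Rightarrow> complex" and K R :: real
  assumes onb: "is_sph_onb N \<psi>"
    and fm: "f \<in> borel_measurable (restrict_space borel lcone)"
    and K: "\<And>x. x \<in> lcone \<Longrightarrow> cmod (f x) \<le> K"
    and K0: "0 \<le> K"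
    and supp: "\<And>x. x \<in> lcone \<Longrightarrow> f x \<noteq> 0 \<Longrightarrow> norm x \<le> R"
    and R0: "0 < R"
begin

definition f0 where "f0 x = (if x \<in> lcone then f x else 0)"
definition G where "G y \<omega> = f0 ((1 / y) *\<^sub>R \<omega>, 1 / y)"
definition r0 where "r0 = 1 / R"

lemma r0_pos: "r0 > 0" using R0 by (simp add: r0_def)

lemma f0_meas: "f0 \<in> borel_measurable borel"
proof -
  have "(\<lambda>x. if x \<in> lcone then f x else 0) \<in> borel_measurable borel"
    by (subst measurable_restrict_space_iff[symmetric]) (use fm lcone_borel in simp_all)
  then show ?thesis unfolding f0_def[abs_def] .
qed

lemma G_meas: "(\<lambda>p. G (fst p) (snd p)) \<in> borel_measurable (lborel \<Otimes>\<^sub>M sph)"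
  unfolding G_def by (rule measurable_compose[OF T_meas2 f0_meas])

lemma G_bound: "cmod (G y \<omega>) \<le> K"
  unfolding G_def f0_def using K K0 by auto

lemma G_zero: "y < r0 \<Longrightarrow> G y \<omega> = 0"
proof -
  assume y: "y < r0"
  show "G y \<omega> = 0"
  proof (cases "((1 / y) *\<^sub>R \<omega>, 1 / y) \<in> lcone")
    case True
    then have yp: "1 / y > 0" by (simp add: lcone_def)
    then have "y > 0" by (simp add: zero_less_divide_iff)
    then have "R < 1 / y" using y R0 unfolding r0_def by (simp add: field_simps)
    also have "1 / y \<le> norm ((1 / y) *\<^sub>R \<omega>, 1 / y)"
    proof -
      show ?thesis using norm_snd_le[of "1 / y" "(1 / y) *\<^sub>R \<omega>"] yp by simp
    qed
    finally have "\<not> norm ((1 / y) *\<^sub>R \<omega>, 1 / y) \<le> R" by simp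
    then show ?thesis using supp[OF True] unfolding G_def f0_def by auto
  qed (simp add: G_def f0_def)
qed

lemma fpol_G: "y > 0 \<Longrightarrow> \<omega> \<in> sphere 0 1 \<Longrightarrow> fpol f y \<omega> = G y \<omega>"
  unfolding fpol_def G_def f0_def lcone_def by auto

definition Fd where "Fd d l y = (\<integral>\<omega>. G y \<omega> * cnj (\<psi> d l \<omega>) \<partial>sph)"
definition Q where "Q y = (\<integral>\<omega>. (cmod (G y \<omega>))^2 \<partial>sph)"

lemma sph_sf: "sigma_finite_measure (sph::'a measure)"
  using sph_finite finite_measure.axioms(1) by blast

lemma psi_meas: "l < N d \<Longrightarrow> \<psi> d l \<in> borel_measurable sph"
  using onb sph_harm_props(1) unfolding is_sph_onb_def by blast

lemma psi_bound: "l < N d \<Longrightarrow> \<exists>M. \<forall>x\<in>sphere 0 1. cmod (\<psi> d l x) \<le> M"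
  using onb sph_harm_props(2) unfolding is_sph_onb_def by blast

lemma Gy_meas: "G y \<in> borel_measurable sph"
  using measurable_Pair2[OF G_meas, of y] by simp

lemma Gy2_int: "integrable sph (\<lambda>\<omega>. (cmod (G y \<omega>))^2)"
proof (rule finite_measure.integrable_const_bound[OF sph_finite])
  show "AE x in sph. norm ((cmod (G y x))^2) \<le> K^2"
    using G_bound K0 by (intro AE_I2) (simp add: power_mono)
  show "(\<lambda>\<omega>. (cmod (G y \<omega>))^2) \<in> borel_measurable sph" using Gy_meas by measurable
qed

lemma psi2_int: "l < N d \<Longrightarrow> integrable sph (\<lambda>\<omega>. (cmod (\<psi> d l \<omega>))^2)"
proof -
  assume l: "l < N d"
  obtain M where M: "\<forall>x\<in>sphere 0 1. cmod (\<psi> d l x) \<le> M" using psi_bound[OF l] by blast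
  show ?thesis
  proof (rule finite_measure.integrable_const_bound[OF sph_finite])
    show "AE x in sph. norm ((cmod (\<psi> d l x))^2) \<le> M^2"
      using M by (intro AE_I2) (auto simp: sph_space power_mono)
    show "(\<lambda>\<omega>. (cmod (\<psi> d l \<omega>))^2) \<in> borel_measurable sph" using psi_meas[OF l] by measurable
  qed
qed

lemma bessel_y:
  assumes J: "finite J" "\<And>d l. (d, l) \<in> J \<Longrightarrow> l < N d"
  shows "(\<Sum>(d, l)\<in>J. (cmod (Fd d l y))^2) \<le> Q y"
proof -
  have "(\<Sum>i\<in>J. (cmod (\<integral>\<omega>. G y \<omega> * cnj ((\<lambda>(d, l). \<psi> d l) i \<omega>) \<partial>sph))^2) \<le> (\<integral>\<omega>. (cmod (G y \<omega>))^2 \<partial>sph)"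
  proof (rule bessel[OF J(1) Gy_meas Gy2_int])
    fix i assume "i \<in> J"
    then obtain d l where i: "i = (d, l)" "l < N d" using J(2) by (cases i) auto
    show "(\<lambda>(d, l). \<psi> d l) i \<in> borel_measurable sph" using psi_meas i by simp
    show "integrable sph (\<lambda>x. (cmod ((\<lambda>(d, l). \<psi> d l) i x))^2)" using psi2_int i by simp
  next
    fix i j assume "i \<in> J" "j \<in> J"
    then obtain d l d' l' where "i = (d, l)" "l < N d" "j = (d', l')" "l' < N d'" using J(2) by (cases i, cases j) auto
    then show "(\<integral>x. (\<lambda>(d, l). \<psi> d l) i x * cnj ((\<lambda>(d, l). \<psi> d l) j x) \<partial>sph) = (if i = j then 1 else 0)"
      using onb_orthonormal[OF onb] by simp
  qed
  then show ?thesis unfolding Fd_def Q_def by (simp add: case_prod_beta')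
qed

lemma Fd_meas: "l < N d \<Longrightarrow> Fd d l \<in> borel_measurable lborel"
proof -
  assume l: "l < N d"
  have "(\<lambda>p. \<psi> d l (snd p)) \<in> borel_measurable (lborel \<Otimes>\<^sub>M sph)"
    by (rule measurable_compose[OF measurable_snd psi_meas[OF l]])
  then have "(\<lambda>p. cnj (\<psi> d l (snd p))) \<in> borel_measurable (lborel \<Otimes>\<^sub>M sph)"
    by (rule measurable_compose) (intro borel_measurable_continuous_onI continuous_intros)
  then have "(\<lambda>p. G (fst p) (snd p) * cnj (\<psi> d l (snd p))) \<in> borel_measurable (lborel \<Otimes>\<^sub>M sph)"
    using G_meas by (intro borel_measurable_times)
  then have "(\<lambda>(y, \<omega>). G y \<omega> * cnj (\<psi> d l \<omega>)) \<in> borel_measurable (lborel \<Otimes>\<^sub>M sph)"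
    by (simp add: case_prod_beta')
  from sigma_finite_measure.borel_measurable_lebesgue_integral[OF sph_sf this]
  show ?thesis unfolding Fd_def[abs_def] .
qed

lemma Q_meas: "Q \<in> borel_measurable lborel"
proof -
  have "(\<lambda>p. (cmod (G (fst p) (snd p)))^2) \<in> borel_measurable (lborel \<Otimes>\<^sub>M sph)"
    using G_meas by measurable
  then have "(\<lambda>(y, \<omega>). (cmod (G y \<omega>))^2) \<in> borel_measurable (lborel \<Otimes>\<^sub>M sph)"
    by (simp add: case_prod_beta')
  from sigma_finite_measure.borel_measurable_lebesgue_integral[OF sph_sf this]
  show ?thesis unfolding Q_def[abs_def] .
qed

lemma Q_bound: "0 \<le> Q y" "Q y \<le> K^2"
proof -
  show "0 \<le> Q y" unfolding Q_def by (rule Bochner_Integration.integral_nonneg) simp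
  have "Q y \<le> (\<integral>\<omega>. K^2 \<partial>(sph::'a measure))"
    unfolding Q_def
  proof (rule Bochner_Integration.integral_mono')
    show "integrable (sph::'a measure) (\<lambda>\<omega>. K^2)" using finite_measure.integrable_const[OF sph_finite] .
    show "(cmod (G y \<omega>))^2 \<le> K^2" for \<omega> using G_bound[of y \<omega>] by (simp add: power_mono)
  qed simp
  also have "\<dots> = K^2"
    using sph_emeasure_space[where 'a='a] by (simp add: measure_def)
  finally show "Q y \<le> K^2" .
qed

lemma Fd_bound: "l < N d \<Longrightarrow> (cmod (Fd d l y))^2 \<le> K^2"
proof -
  assume l: "l < N d"
  have "(\<Sum>(d, l)\<in>{(d, l)}. (cmod (Fd d l y))^2) \<le> Q y"
    by (rule bessel_y) (use l in auto)
  then show ?thesis using Q_bound(2)[of y] by simp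
qed

lemma Fd_zero: "y < r0 \<Longrightarrow> Fd d l y = 0"
  unfolding Fd_def by (simp add: G_zero)

lemma Q_zero: "y < r0 \<Longrightarrow> Q y = 0"
  unfolding Q_def by (simp add: G_zero)

lemma fdl_Fd: "y > 0 \<Longrightarrow> fdl \<psi> f d l y = Fd d l y"
  unfolding fdl_def Fd_def
  by (rule Bochner_Integration.integral_cong[OF refl]) (simp add: sph_space fpol_G)

end

locale cfg2 = cfg +
  fixes s :: real
  assumes s_lo: "real (DIM('a) - 1) / 2 < s" and s_hi: "s < real (DIM('a) - 1)"
begin


lemma nn_pos: "real (DIM('a) - 1) > 0" using s_lo s_hi by linarith

definition A where "A d l = (\<integral>y. indicator {r0..} y * ((cmod (Fd d l y))^2 * y powr (- (real (DIM('a) - 1) + 1))) \<partial>lborel)"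
definition Cw where "Cw = r0 powr (real (DIM('a) - 1) - 1 - 2 * s + 1) / (- (real (DIM('a) - 1) - 1 - 2 * s + 1))"

lemma w_int: "integrable lborel (\<lambda>y. indicator {r0..} y * y powr (- (real (DIM('a) - 1) + 1)))"
  using powr_tail(1)[of "- (real (DIM('a) - 1) + 1)" r0] nn_pos r0_pos by simp

lemma bounded_weighted_int:
  assumes hm: "h \<in> borel_measurable lborel" and hb: "\<And>y. \<bar>h y\<bar> \<le> K^2"
  shows "integrable lborel (\<lambda>y. indicator {r0..} y * (h y * y powr (- (real (DIM('a) - 1) + 1))))"
proof (rule Bochner_Integration.integrable_bound)
  show "integrable lborel (\<lambda>y. K^2 * (indicator {r0..} y * y powr (- (real (DIM('a) - 1) + 1))))"
    using w_int by (rule integrable_mult_right)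
  show "(\<lambda>y. indicator {r0..} y * (h y * y powr (- (real (DIM('a) - 1) + 1)))) \<in> borel_measurable lborel"
    using hm by measurable
  show "AE y in lborel. norm (indicator {r0..} y * (h y * y powr (- (real (DIM('a) - 1) + 1)))) \<le> norm (K^2 * (indicator {r0..} y * y powr (- (real (DIM('a) - 1) + 1))))"
  proof (intro AE_I2)
    fix y :: real
    have "\<bar>h y\<bar> * y powr (- (real (DIM('a) - 1) + 1)) \<le> K^2 * y powr (- (real (DIM('a) - 1) + 1))"
      using hb[of y] by (intro mult_right_mono) auto
    then show "norm (indicator {r0..} y * (h y * y powr (- (real (DIM('a) - 1) + 1)))) \<le> norm (K^2 * (indicator {r0..} y * y powr (- (real (DIM('a) - 1) + 1))))"
      by (auto simp: indicator_def abs_mult)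
  qed
qed

lemma A_int: "l < N d \<Longrightarrow> integrable lborel (\<lambda>y. indicator {r0..} y * ((cmod (Fd d l y))^2 * y powr (- (real (DIM('a) - 1) + 1))))"
  using Fd_meas Fd_bound by (intro bounded_weighted_int) auto

lemma Q_int: "integrable lborel (\<lambda>y. indicator {r0..} y * (Q y * y powr (- (real (DIM('a) - 1) + 1))))"
  using Q_meas Q_bound by (intro bounded_weighted_int) auto

lemma Cw_pos: "Cw > 0"
proof -
  have "real (DIM('a) - 1) - 1 - 2 * s + 1 < 0" using s_lo by linarith
  then show ?thesis unfolding Cw_def using r0_pos by (simp add: divide_pos_neg)
qed

lemma mellin_bound:
  assumes l: "l < N d"
  shows "(cmod (mellin (fdl \<psi> f d l) s))^2 \<le> Cw * A d l"
proof -
  let ?n = "real (DIM('a) - 1)"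
  define a where "a y = complex_of_real (indicator {r0..} y * y powr (- (?n + 1) / 2)) * Fd d l y" for y
  define b where "b y = complex_of_real (indicator {r0..} y * y powr ((?n + 1) / 2 - s - 1))" for y
  have pt: "indicator {0<..} y *\<^sub>R (fdl \<psi> f d l y * complex_of_real (y powr (- (s + 1)))) = a y * cnj (b y)" for y
  proof (cases "r0 \<le> y")
    case True
    then have y: "y > 0" using r0_pos by linarith
    have "y powr (- (?n + 1) / 2) * y powr ((?n + 1) / 2 - s - 1) = y powr (- (s + 1))"
      using y by (simp add: powr_add[symmetric])
    then have "complex_of_real (y powr (- (?n + 1) / 2)) * complex_of_real (y powr ((?n + 1) / 2 - s - 1))
        = complex_of_real (y powr (- (s + 1)))"
      by (metis of_real_mult)
    then show ?thesis using True y unfolding a_def b_def by (simp add: fdl_Fd mult_ac)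
  next
    case False
    then show ?thesis
    proof (cases "y > 0")
      case True
      then show ?thesis using False unfolding a_def b_def by (simp add: fdl_Fd Fd_zero)
    qed (simp add: a_def b_def)
  qed
  have m: "mellin (fdl \<psi> f d l) s = (\<integral>y. a y * cnj (b y) \<partial>lborel)"
    unfolding mellin_def set_lebesgue_integral_def pt ..
  have am: "a \<in> borel_measurable lborel" unfolding a_def using Fd_meas[OF l] by measurable
  have bm: "b \<in> borel_measurable lborel" unfolding b_def by measurable
  have a2: "(\<lambda>y. (cmod (a y))^2) = (\<lambda>y. indicator {r0..} y * ((cmod (Fd d l y))^2 * y powr (- (?n + 1))))"
  proof
    fix y
    show "(cmod (a y))^2 = indicator {r0..} y * ((cmod (Fd d l y))^2 * y powr (- (?n + 1)))"
    proof (cases "r0 \<le> y")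
      case True
      then have y: "y > 0" using r0_pos by linarith
      have "(y powr (- (?n + 1) / 2))^2 = y powr (- (?n + 1))"
        using y by (simp add: powr_powr[symmetric] power2_eq_square powr_add[symmetric])
      then show ?thesis using True unfolding a_def by (simp add: norm_mult power_mult_distrib abs_of_nonneg)
    qed (simp add: a_def)
  qed
  have b2: "(\<lambda>y. (cmod (b y))^2) = (\<lambda>y. indicator {r0..} y * y powr (?n - 1 - 2 * s))"
  proof
    fix y
    show "(cmod (b y))^2 = indicator {r0..} y * y powr (?n - 1 - 2 * s)"
    proof (cases "r0 \<le> y")
      case True
      then have y: "y > 0" using r0_pos by linarith
      have "(y powr ((?n + 1) / 2 - s - 1))^2 = y powr (?n - 1 - 2 * s)"
        using y by (simp add: power2_eq_square powr_add[symmetric] algebra_simps)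
      then show ?thesis using True unfolding b_def by (simp add: abs_of_nonneg)
    qed (simp add: b_def)
  qed
  have pneg: "?n - 1 - 2 * s < -1" using s_lo by linarith
  have b2i: "integrable lborel (\<lambda>y. (cmod (b y))^2)"
    unfolding b2 using powr_tail(1)[OF pneg r0_pos] .
  have b2v: "(\<integral>y. (cmod (b y))^2 \<partial>lborel) = Cw"
    unfolding b2 Cw_def using powr_tail(2)[OF pneg r0_pos] by simp
  have a2i: "integrable lborel (\<lambda>y. (cmod (a y))^2)"
    unfolding a2 using A_int[OF l] .
  have a2v: "(\<integral>y. (cmod (a y))^2 \<partial>lborel) = A d l"
    unfolding a2 A_def ..
  have "(cmod (\<integral>y. a y * cnj (b y) \<partial>lborel))^2 \<le> (\<integral>y. (cmod (a y))^2 \<partial>lborel) * (\<integral>y. (cmod (b y))^2 \<partial>lborel)"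
    by (rule cauchy_schwarz_L2[OF am bm a2i b2i]) (use b2v Cw_pos in simp)
  then show ?thesis unfolding m a2v b2v by (simp add: mult.commute)
qed

lemma L2_eq: "L2sq_cone f = (\<integral>y. indicator {r0..} y * (Q y * y powr (- (real (DIM('a) - 1) + 1))) \<partial>lborel)"
proof -
  have pt: "indicator {0<..} y *\<^sub>R ((\<integral>\<omega>. (cmod (fpol f y \<omega>))^2 \<partial>sph) * y powr (- (real (DIM('a) - 1) + 1)))
      = indicator {r0..} y * (Q y * y powr (- (real (DIM('a) - 1) + 1)))" for y
  proof (cases "y > 0")
    case True
    have e: "(\<integral>\<omega>. (cmod (fpol f y \<omega>))^2 \<partial>sph) = Q y"
      unfolding Q_def by (rule Bochner_Integration.integral_cong[OF refl]) (simp add: sph_space fpol_G True)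
    show ?thesis
    proof (cases "r0 \<le> y")
      case False
      then show ?thesis using True e Q_zero[of y] by simp
    qed (use True e in simp)
  next
    case False
    then show ?thesis using r0_pos by (simp add: indicator_def)
  qed
  have "(\<lambda>y. indicator {0<..} y *\<^sub>R ((\<integral>\<omega>. (cmod (fpol f y \<omega>))^2 \<partial>sph) * y powr (- (real (DIM('a) - 1) + 1))))
      = (\<lambda>y. indicator {r0..} y * (Q y * y powr (- (real (DIM('a) - 1) + 1))))"
    by (rule ext) (rule pt)
  then show ?thesis unfolding L2sq_cone_def set_lebesgue_integral_def by simp
qed

lemma sumA:
  assumes J: "finite J" "\<And>d l. (d, l) \<in> J \<Longrightarrow> l < N d"
  shows "(\<Sum>(d, l)\<in>J. A d l) \<le> L2sq_cone f"
proof -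
  have "(\<Sum>(d, l)\<in>J. A d l) = (\<integral>y. (\<Sum>(d, l)\<in>J. indicator {r0..} y * ((cmod (Fd d l y))^2 * y powr (- (real (DIM('a) - 1) + 1)))) \<partial>lborel)"
    unfolding A_def
    by (subst Bochner_Integration.integral_sum) (use A_int J(2) in \<open>auto simp: case_prod_beta'\<close>)
  also have "\<dots> \<le> (\<integral>y. indicator {r0..} y * (Q y * y powr (- (real (DIM('a) - 1) + 1))) \<partial>lborel)"
  proof (rule Bochner_Integration.integral_mono)
    show "integrable lborel (\<lambda>y. \<Sum>(d, l)\<in>J. indicator {r0..} y * ((cmod (Fd d l y))^2 * y powr (- (real (DIM('a) - 1) + 1))))"
      using A_int J(2) by (auto simp: case_prod_beta' intro!: Bochner_Integration.integrable_sum)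
    show "integrable lborel (\<lambda>y. indicator {r0..} y * (Q y * y powr (- (real (DIM('a) - 1) + 1))))"
      by (rule Q_int)
    fix y
    have "(\<Sum>(d, l)\<in>J. indicator {r0..} y * ((cmod (Fd d l y))^2 * y powr (- (real (DIM('a) - 1) + 1))))
        = indicator {r0..} y * y powr (- (real (DIM('a) - 1) + 1)) * (\<Sum>(d, l)\<in>J. (cmod (Fd d l y))^2)"
      by (simp add: sum_distrib_left case_prod_beta' mult_ac)
    also have "\<dots> \<le> indicator {r0..} y * y powr (- (real (DIM('a) - 1) + 1)) * Q y"
      using bessel_y[OF J, of y] by (intro mult_left_mono) auto
    finally show "(\<Sum>(d, l)\<in>J. indicator {r0..} y * ((cmod (Fd d l y))^2 * y powr (- (real (DIM('a) - 1) + 1))))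
        \<le> indicator {r0..} y * (Q y * y powr (- (real (DIM('a) - 1) + 1)))" by (simp add: mult_ac)
  qed
  finally show ?thesis unfolding L2_eq .
qed

lemma partial_bound:
  "(\<Sum>d<D. Pd (DIM('a) - 1) d s * (\<Sum>l<N d. (cmod (mellin (fdl \<psi> f d l) s))^2)) \<le> Cw * L2sq_cone f"
proof -
  have "(\<Sum>d<D. Pd (DIM('a) - 1) d s * (\<Sum>l<N d. (cmod (mellin (fdl \<psi> f d l) s))^2))
      \<le> (\<Sum>d<D. (\<Sum>l<N d. (cmod (mellin (fdl \<psi> f d l) s))^2))"
  proof (rule sum_mono)
    fix d
    have "0 \<le> (\<Sum>l<N d. (cmod (mellin (fdl \<psi> f d l) s))^2)" by (intro sum_nonneg) auto
    then show "Pd (DIM('a) - 1) d s * (\<Sum>l<N d. (cmod (mellin (fdl \<psi> f d l) s))^2) \<le> (\<Sum>l<N d. (cmod (mellin (fdl \<psi> f d l) s))^2)"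
      using Pd_bounds[OF s_lo s_hi, of d] by (simp add: mult_left_le_one_le)
  qed
  also have "\<dots> \<le> (\<Sum>d<D. (\<Sum>l<N d. Cw * A d l))"
    by (intro sum_mono mellin_bound) auto
  also have "\<dots> = Cw * (\<Sum>(d, l)\<in>Sigma {..<D} (\<lambda>d. {..<N d}). A d l)"
    by (simp add: sum.Sigma[symmetric] sum_distrib_left)
  also have "\<dots> \<le> Cw * L2sq_cone f"
    using Cw_pos by (intro mult_left_mono sumA) auto
  finally show ?thesis .
qed

end

theorem lemma6p3:
  fixes N :: "nat \<Rightarrow> nat" and \<psi> :: "nat \<Rightarrow> nat \<Rightarrow> 'a::euclidean_space \<Rightarrow> complex"
    and B :: "('a \<times> real) set" and s :: real
  assumes "DIM('a) \<ge> 4"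
    and "is_sph_onb N \<psi>"
    and "bounded B"
    and "real (DIM('a) - 1) / 2 < s" and "s < real (DIM('a) - 1)"
  shows "\<exists>C. \<forall>f :: 'a \<times> real \<Rightarrow> complex.
           f \<in> borel_measurable (restrict_space borel lcone) \<and>
           (\<exists>K. \<forall>x\<in>lcone. cmod (f x) \<le> K) \<and>
           {x\<in>lcone. f x \<noteq> 0} \<subseteq> B
           \<longrightarrow> cmod (Mff N \<psi> f f s) \<le> C * L2sq_cone f"
proof -
  obtain R where R0: "R > 0" and RB: "\<And>x. x \<in> B \<Longrightarrow> norm x \<le> R"
    using assms(3) unfolding bounded_pos by blast
  define C where "C = (1 / R) powr (real (DIM('a) - 1) - 1 - 2 * s + 1) / (- (real (DIM('a) - 1) - 1 - 2 * s + 1))"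
  show ?thesis
  proof (intro exI[of _ C] allI impI, elim conjE exE)
    fix f :: "'a \<times> real \<Rightarrow> complex" and K
    assume fm: "f \<in> borel_measurable (restrict_space borel lcone)"
      and K: "\<forall>x\<in>lcone. cmod (f x) \<le> K" and sB: "{x\<in>lcone. f x \<noteq> 0} \<subseteq> B"
    interpret cfg2 N \<psi> f "max K 0" R s
    proof unfold_locales
      show "is_sph_onb N \<psi>" by (rule assms(2))
      show "f \<in> borel_measurable (restrict_space borel lcone)" by (rule fm)
      show "cmod (f x) \<le> max K 0" if "x \<in> lcone" for x using K that by fastforce
      show "0 \<le> max K 0" by simp
      show "norm x \<le> R" if "x \<in> lcone" "f x \<noteq> 0" for x using sB that RB by blast
      show "0 < R" by (rule R0)
      show "real (DIM('a) - 1) / 2 < s" "s < real (DIM('a) - 1)" by (rule assms(4), rule assms(5))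
    qed
    have CC: "C = Cw" unfolding C_def Cw_def r0_def ..
    define t where "t d = Pd (DIM('a) - 1) d s * (\<Sum>l<N d. (cmod (mellin (fdl \<psi> f d l) s))^2)" for d
    have t0: "0 \<le> t d" for d
      unfolding t_def using Pd_bounds(1)[OF s_lo s_hi] by (intro mult_nonneg_nonneg sum_nonneg) auto
    have tb: "sum t {..<D} \<le> C * L2sq_cone f" for D
      unfolding t_def CC by (rule partial_bound)
    have st: "summable t" by (rule summableI_nonneg_bounded[OF t0 tb])
    have terms: "complex_of_real (Pd (DIM('a) - 1) d s) *
       (\<Sum>l<N d. mellin (fdl \<psi> f d l) s * cnj (mellin (fdl \<psi> f d l) s)) = complex_of_real (t d)" for d
      unfolding t_def of_real_mult of_real_sum complex_norm_square ..
    have "Mff N \<psi> f f s = (\<Sum>d. complex_of_real (t d))"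
      unfolding Mff_def terms ..
    also have "\<dots> = complex_of_real (suminf t)" by (rule suminf_of_real[OF st, symmetric])
    finally have "cmod (Mff N \<psi> f f s) = suminf t"
      using suminf_nonneg[OF st t0] by simp
    also have "\<dots> \<le> C * L2sq_cone f" by (rule suminf_le_const[OF st tb])
    finally show "cmod (Mff N \<psi> f f s) \<le> C * L2sq_cone f" .
  qed
qed


end
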